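(* Let $K\subset\mathbb{R}^n$ be closed and consider $\Sigma:\ \dot x\in F(x),\ x\in C$, satisfying (SA), and assume Assumptions 1, 2 and 3 hold. Let $\phi$ be a solution to $\Sigma$ with $\phi(0)=x\in\mathcal{P}$ that leaves $K$ immediately. Then $$\operatorname{cl}(F_\phi(x))\subset T_{\partial K\cap C}(x)\setminus T_{\partial K\setminus\operatorname{int}(C)}(x).$$
   Context: Standing assumption (SA): $C \subset \mathbb{R}^n$ is closed; $F:\mathbb{R}^n \rightrightarrows \mathbb{R}^n$ has $F(x)$ nonempty, closed and convex for all $x \in C$; $F$ is continuous (upper and lower semicontinuous) and one-sided locally Lipschitz: for every nonempty compact $\mathcal{N} \subset \operatorname{dom} F$ there is $k>0$ with $(x_1-x_2)^\top F(x_1) \subset (x_1-x_2)^\top F(x_2) + k|x_1-x_2|^2\mathbb{B}$ for all $x_1,x_2 \in \mathcal{N}$ ($\mathbb{B}$ the closed unit ball). Solutions: $\phi$ is locally absolutely continuous with values in $C$, $\operatorname{dom}\phi=[0,T]$ ($T\ge0$) or $[0,T)$ ($T\in\mathbb{R}_{\ge0}\cup\{+\infty\}$), and $\dot\phi(t)\in F(\phi(t))$ for a.e. $t\in\operatorname{dom}\phi$. A solution $\phi$ with $\phi(0)=x$ leaves $K$ immediately if there is $T>0$ with $\phi((0,T])\subset C\setminus K$. Set of initial speeds: $F_\phi(x):=\{v\in\mathbb{R}^n:\ \exists\{t_i\}\subset\mathbb{R}_{>0},\ t_i\to0,\ \lim_i (\phi(t_i)-\phi(0))/t_i=v\}$.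 Contingent cone of $S$ at $x\in\operatorname{cl}(S)$: $T_S(x)=\{v: \exists t_i\to 0^+, \exists v_i\to v,\ x+t_iv_i\in S\}$. Adjacent cone: $T^a_S(x)=\{v: \forall t_i\to 0^+, \exists v_i\to v,\ x+t_iv_i\in S\}$. $\mathcal{P}:=\{x\in\partial K\cap\partial C:\ \mathcal{N}(x)\cap(C\setminus K)\neq\emptyset \text{ for every neighborhood } \mathcal{N}(x) \text{ of } x\}$. Assumption 1: $F(x)\subset T_K(x)$ for all $x\in\mathcal{P}$. Assumption 2: $F(x)\cap T_{\partial K\cap\partial C}(x)=\emptyset$ for all $x\in\mathcal{P}$. Assumption 3: for each $x\in\mathcal{P}$: (a) $T_{\partial K}(x)=T^a_{\partial K}(x)$; (b) $T_C(x)=T^a_C(x)$; (c) there exist a neighborhood $\mathcal{N}(x)$, $c>0$, $\alpha\in[0,1)$ such that for all $(x_1,x_2)\in((\partial K\setminus C)\cap\mathcal{N}(x))\times((\partial C\setminus\partial K)\cap\mathcal{N}(x))$ there exist $(v_1,v_2)\in T_{\partial K}(x_1)\times T_C(x_2)$ with $|(v_1,v_2)|\le c|x_1-x_2|$ and $x_2-x_1\in v_1-v_2+\alpha|x_1-x_2|\mathbb{B}$. *)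

theory Defs
  imports "HOL-Analysis.Analysis"
begin

definition sv_dom :: "('a \<Rightarrow> 'b set) \<Rightarrow> 'a set" where
  "sv_dom F = {x. F x \<noteq> {}}"

definition sv_usc_at :: "('a::metric_space \<Rightarrow> 'b::topological_space set) \<Rightarrow> 'a \<Rightarrow> bool" where
  "sv_usc_at F x \<longleftrightarrow> (\<forall>U. open U \<and> F x \<subseteq> U \<longrightarrow> (\<exists>\<eta>>0. \<forall>y\<in>ball x \<eta>. F y \<subseteq> U))"

definition sv_lsc_at :: "('a::metric_space \<Rightarrow> 'b::topological_space set) \<Rightarrow> 'a \<Rightarrow> bool" where
  "sv_lsc_at F x \<longleftrightarrow> (\<forall>U. open U \<and> F x \<inter> U \<noteq> {} \<longrightarrow>
      (\<exists>\<eta>>0. \<forall>y\<in>ball x \<eta> \<inter> sv_dom F. F y \<inter> U \<noteq> {}))"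

definition sv_continuous :: "('a::metric_space \<Rightarrow> 'b::topological_space set) \<Rightarrow> bool" where
  "sv_continuous F \<longleftrightarrow> (\<forall>x\<in>sv_dom F. sv_usc_at F x \<and> sv_lsc_at F x)"

definition one_sided_loc_lipschitz :: "('a::euclidean_space \<Rightarrow> 'a set) \<Rightarrow> bool" where
  "one_sided_loc_lipschitz F \<longleftrightarrow>
     (\<forall>N. N \<noteq> {} \<and> compact N \<and> N \<subseteq> sv_dom F \<longrightarrow>
        (\<exists>k>0. \<forall>x1\<in>N. \<forall>x2\<in>N. \<forall>v\<in>F x1. \<exists>w\<in>F x2. \<exists>r.
            \<bar>r\<bar> \<le> k * (norm (x1 - x2))\<^sup>2 \<and> (x1 - x2) \<bullet> v = (x1 - x2) \<bullet> w + r))"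

definition standing_assumption :: "'a::euclidean_space set \<Rightarrow> ('a \<Rightarrow> 'a set) \<Rightarrow> bool" where
  "standing_assumption C F \<longleftrightarrow> closed C \<and>
     (\<forall>x\<in>C. F x \<noteq> {} \<and> closed (F x) \<and> convex (F x)) \<and>
     sv_continuous F \<and> one_sided_loc_lipschitz F"

definition abs_continuous_on_interval :: "(real \<Rightarrow> 'a::real_normed_vector) \<Rightarrow> real \<Rightarrow> real \<Rightarrow> bool" where
  "abs_continuous_on_interval \<phi> a b \<longleftrightarrow>
     (\<forall>\<epsilon>>0. \<exists>\<delta>>0. \<forall>(n::nat) (s::nat \<Rightarrow> real) (u::nat \<Rightarrow> real).
        (\<forall>i<n. a \<le> s i \<and> s i \<le> u i \<and> u i \<le> b) \<and>
        (\<forall>i<n. \<forall>j<n. i \<noteq> j \<longrightarrow> u i \<le> s j \<or> u j \<le> s i) \<and>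
        (\<Sum>i<n. u i - s i) < \<delta>
        \<longrightarrow> (\<Sum>i<n. norm (\<phi> (u i) - \<phi> (s i))) < \<epsilon>)"

definition loc_abs_continuous_on :: "real set \<Rightarrow> (real \<Rightarrow> 'a::real_normed_vector) \<Rightarrow> bool" where
  "loc_abs_continuous_on D \<phi> \<longleftrightarrow> (\<forall>a b. a \<le> b \<and> {a..b} \<subseteq> D \<longrightarrow> abs_continuous_on_interval \<phi> a b)"

definition solution_domain :: "real set \<Rightarrow> bool" where
  "solution_domain D \<longleftrightarrow> (\<exists>T\<ge>0. D = {0..T} \<or> D = {0..<T}) \<or> D = {0..}"

definition is_solution :: "'a::euclidean_space set \<Rightarrow> ('a \<Rightarrow> 'a set) \<Rightarrow> (real \<Rightarrow> 'a) \<Rightarrow> real set \<Rightarrow> bool" where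
  "is_solution C F \<phi> D \<longleftrightarrow> solution_domain D \<and> loc_abs_continuous_on D \<phi> \<and>
     (\<forall>t\<in>D. \<phi> t \<in> C) \<and>
     (AE t in lebesgue. t \<in> D \<longrightarrow> (\<exists>v. (\<phi> has_vector_derivative v) (at t within D) \<and> v \<in> F (\<phi> t)))"

definition leaves_immediately :: "'a set \<Rightarrow> 'a set \<Rightarrow> (real \<Rightarrow> 'a) \<Rightarrow> real set \<Rightarrow> bool" where
  "leaves_immediately C K \<phi> D \<longleftrightarrow> (\<exists>T>0. {0<..T} \<subseteq> D \<and> \<phi> ` {0<..T} \<subseteq> C - K)"

definition initial_speeds :: "(real \<Rightarrow> 'a::real_normed_vector) \<Rightarrow> real set \<Rightarrow> 'a set" where
  "initial_speeds \<phi> D = {v. \<exists>t::nat \<Rightarrow> real. (\<forall>i. t i > 0 \<and> t i \<in> D) \<and> t \<longlonglongrightarrow> 0 \<and>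
       (\<lambda>i. (\<phi> (t i) - \<phi> 0) /\<^sub>R t i) \<longlonglongrightarrow> v}"

definition contingent_cone :: "'a::real_normed_vector set \<Rightarrow> 'a \<Rightarrow> 'a set" where
  "contingent_cone S x = {v. \<exists>(t::nat \<Rightarrow> real) (w::nat \<Rightarrow> 'a). (\<forall>i. t i > 0) \<and> t \<longlonglongrightarrow> 0 \<and>
       w \<longlonglongrightarrow> v \<and> (\<forall>i. x + t i *\<^sub>R w i \<in> S)}"

definition adjacent_cone :: "'a::real_normed_vector set \<Rightarrow> 'a \<Rightarrow> 'a set" where
  "adjacent_cone S x = {v. \<forall>t::nat \<Rightarrow> real. (\<forall>i. t i > 0) \<and> t \<longlonglongrightarrow> 0 \<longrightarrow>
       (\<exists>w::nat \<Rightarrow> 'a. w \<longlonglongrightarrow> v \<and> (\<forall>i. x + t i *\<^sub>R w i \<in> S))}"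

text \<open>The set \<P>.\<close>
definition bad_points :: "'a::real_normed_vector set \<Rightarrow> 'a set \<Rightarrow> 'a set" where
  "bad_points C K = {x \<in> frontier K \<inter> frontier C.
      \<forall>N. open N \<and> x \<in> N \<longrightarrow> N \<inter> (C - K) \<noteq> {}}"

definition assumption1 :: "'a::euclidean_space set \<Rightarrow> ('a \<Rightarrow> 'a set) \<Rightarrow> 'a set \<Rightarrow> bool" where
  "assumption1 C F K \<longleftrightarrow> (\<forall>x\<in>bad_points C K. F x \<subseteq> contingent_cone K x)"

definition assumption2 :: "'a::euclidean_space set \<Rightarrow> ('a \<Rightarrow> 'a set) \<Rightarrow> 'a set \<Rightarrow> bool" where
  "assumption2 C F K \<longleftrightarrow>
     (\<forall>x\<in>bad_points C K. F x \<inter> contingent_cone (frontier K \<inter> frontier C) x = {})"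

definition assumption3 :: "'a::euclidean_space set \<Rightarrow> 'a set \<Rightarrow> bool" where
  "assumption3 C K \<longleftrightarrow> (\<forall>x\<in>bad_points C K.
     contingent_cone (frontier K) x = adjacent_cone (frontier K) x \<and>
     contingent_cone C x = adjacent_cone C x \<and>
     (\<exists>N c \<alpha>. open N \<and> x \<in> N \<and> c > 0 \<and> 0 \<le> \<alpha> \<and> \<alpha> < 1 \<and>
        (\<forall>x1\<in>(frontier K - C) \<inter> N. \<forall>x2\<in>(frontier C - frontier K) \<inter> N.
           \<exists>v1\<in>contingent_cone (frontier K) x1. \<exists>v2\<in>contingent_cone C x2.
             norm (v1, v2) \<le> c * norm (x1 - x2) \<and>
             norm ((x2 - x1) - (v1 - v2)) \<le> \<alpha> * norm (x1 - x2))))"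

end

theory Submission
  imports Defs
begin


lemma cc_iff:
  "v \<in> contingent_cone S x \<longleftrightarrow>
   (\<forall>e>0. \<forall>d>0. \<exists>t w. 0 < t \<and> t < d \<and> norm (w - v) < e \<and> x + t *\<^sub>R w \<in> S)"
proof
  assume "v \<in> contingent_cone S x"
  then obtain t w where t: "\<forall>i. t i > 0" "t \<longlonglongrightarrow> 0" and w: "w \<longlonglongrightarrow> v"
    and S: "\<forall>i. x + t i *\<^sub>R w i \<in> S" unfolding contingent_cone_def by blast
  show "\<forall>e>0. \<forall>d>0. \<exists>t w. 0 < t \<and> t < d \<and> norm (w - v) < e \<and> x + t *\<^sub>R w \<in> S"
  proof (intro allI impI)
    fix e d :: real assume e: "e > 0" and d: "d > 0"
    have "eventually (\<lambda>i. dist (t i) 0 < d) sequentially" using t(2) d by (rule tendstoD)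
    moreover have "eventually (\<lambda>i. dist (w i) v < e) sequentially" using w e by (rule tendstoD)
    ultimately have "eventually (\<lambda>i. dist (t i) 0 < d \<and> dist (w i) v < e) sequentially"
      by (rule eventually_conj)
    then obtain N where "\<forall>n\<ge>N. dist (t n) 0 < d \<and> dist (w n) v < e"
      unfolding eventually_sequentially by blast
    then have "dist (t N) 0 < d" "dist (w N) v < e" by auto
    then show "\<exists>t w. 0 < t \<and> t < d \<and> norm (w - v) < e \<and> x + t *\<^sub>R w \<in> S"
      using t(1) S by (intro exI[of _ "t N"] exI[of _ "w N"]) (auto simp: dist_norm)
  qed
next
  assume H: "\<forall>e>0. \<forall>d>0. \<exists>t w. 0 < t \<and> t < d \<and> norm (w - v) < e \<and> x + t *\<^sub>R w \<in> S"
  have "\<forall>k::nat. \<exists>p. 0 < fst p \<and> fst p < 1/(Suc k) \<and> norm (snd p - v) < 1/(Suc k) \<and> x + fst p *\<^sub>R snd p \<in> S"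
  proof
    fix k :: nat
    have pos: "1/real (Suc k) > 0" by simp
    obtain t w where "0 < t \<and> t < 1/(Suc k) \<and> norm (w - v) < 1/(Suc k) \<and> x + t *\<^sub>R w \<in> S"
      using H pos by blast
    then show "\<exists>p. 0 < fst p \<and> fst p < 1/(Suc k) \<and> norm (snd p - v) < 1/(Suc k) \<and> x + fst p *\<^sub>R snd p \<in> S"
      by (intro exI[of _ "(t,w)"]) simp
  qed
  then have "\<exists>p. \<forall>k::nat. 0 < fst (p k) \<and> fst (p k) < 1/(Suc k) \<and> norm (snd (p k) - v) < 1/(Suc k) \<and> x + fst (p k) *\<^sub>R snd (p k) \<in> S"
    by (rule choice)
  then obtain p where p0: "\<forall>k. 0 < fst (p k) \<and> fst (p k) < 1/(Suc k) \<and> norm (snd (p k) - v) < 1/(Suc k) \<and> x + fst (p k) *\<^sub>R snd (p k) \<in> S"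
    by (elim exE)
  note p = spec[OF p0]
  have t0: "(\<lambda>k. fst (p k)) \<longlonglongrightarrow> 0"
  proof (rule LIMSEQ_I)
    fix r :: real assume "r > 0"
    then obtain N where N0: "inverse (real (Suc N)) < r" using reals_Archimedean by blast
    then have N: "1 / real (Suc N) < r" by (simp add: inverse_eq_divide)
    show "\<exists>no. \<forall>n\<ge>no. norm (fst (p n) - 0) < r"
    proof (intro exI allI impI)
      fix n assume "n \<ge> N"
      then have "1/real (Suc n) \<le> 1/real (Suc N)" by (intro divide_left_mono) auto
      then show "norm (fst (p n) - 0) < r" using p[of n] N by simp
    qed
  qed
  have wv: "(\<lambda>k. snd (p k)) \<longlonglongrightarrow> v"
  proof (rule LIMSEQ_I)
    fix r :: real assume "r > 0"
    then obtain N where N0: "inverse (real (Suc N)) < r" using reals_Archimedean by blast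
    then have N: "1 / real (Suc N) < r" by (simp add: inverse_eq_divide)
    show "\<exists>no. \<forall>n\<ge>no. norm (snd (p n) - v) < r"
    proof (intro exI allI impI)
      fix n assume "n \<ge> N"
      then have "1/real (Suc n) \<le> 1/real (Suc N)" by (intro divide_left_mono) auto
      then show "norm (snd (p n) - v) < r" using p[of n] N by simp
    qed
  qed
  show "v \<in> contingent_cone S x" unfolding contingent_cone_def
    apply (rule CollectI)
    apply (rule exI[of _ "\<lambda>k. fst (p k)"])
    apply (rule exI[of _ "\<lambda>k. snd (p k)"])
    using p t0 wv by simp
qed

lemma cc_closed: "closed (contingent_cone S x)"
proof -
  have "closure (contingent_cone S x) \<subseteq> contingent_cone S x"
  proof
    fix v assume v: "v \<in> closure (contingent_cone S x)"
    show "v \<in> contingent_cone S x" unfolding cc_iff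
    proof (intro allI impI)
      fix e d :: real assume e: "e > 0" and d: "d > 0"
      obtain v' where v': "v' \<in> contingent_cone S x" "dist v' v < e/2"
        using v e unfolding closure_approachable by (meson half_gt_zero)
      then obtain t w where "0 < t" "t < d" "norm (w - v') < e/2" "x + t *\<^sub>R w \<in> S"
        unfolding cc_iff using e d by (meson half_gt_zero)
      moreover have "norm (w - v) \<le> norm (w - v') + norm (v' - v)"
        using norm_triangle_ineq[of "w - v'" "v' - v"] by simp
      ultimately show "\<exists>t w. 0 < t \<and> t < d \<and> norm (w - v) < e \<and> x + t *\<^sub>R w \<in> S"
        using v'(2) by (intro exI[of _ t] exI[of _ w]) (auto simp: dist_norm)
    qed
  qed
  then show ?thesis using closure_subset_eq by blast
qed

lemma cc_mono: "S \<subseteq> T \<Longrightarrow> contingent_cone S x \<subseteq> contingent_cone T x"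
  unfolding contingent_cone_def by blast



lemma convex_lt:
  fixes l a b e :: real
  assumes "0 \<le> l" "l \<le> 1" "a < e" "b < e"
  shows "(1 - l) * a + l * b < e"
proof (cases "l = 0")
  case True then show ?thesis using assms by simp
next
  case False
  then have "l * b < l * e" using assms by (intro mult_strict_left_mono) auto
  moreover have "(1 - l) * a \<le> (1 - l) * e" using assms by (intro mult_left_mono) auto
  ultimately show ?thesis by (simp add: algebra_simps)
qed

lemma cross:
  fixes K :: "'a::real_normed_vector set"
  assumes v: "v \<in> contingent_cone K x"
    and out: "\<forall>e>0. \<forall>d>0. \<exists>t w. 0 < t \<and> t < d \<and> norm (w - v) < e \<and> x + t *\<^sub>R w \<notin> K"
  shows "v \<in> contingent_cone (frontier K) x"
  unfolding cc_iff
proof (intro allI impI)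
  fix e d :: real assume e: "e > 0" and d: "d > 0"
  obtain s w where s: "0 < s" "s < d" "norm (w - v) < e" "x + s *\<^sub>R w \<in> K"
    using v e d unfolding cc_iff by blast
  obtain t q where t: "0 < t" "t < d" "norm (q - v) < e" "x + t *\<^sub>R q \<notin> K"
    using out e d by blast
  define gam where "gam = (\<lambda>(l::real). x + ((1 - l) * s + l * t) *\<^sub>R ((1-l) *\<^sub>R w + l *\<^sub>R q))"
  have "continuous_on {0..1} gam" unfolding gam_def by (intro continuous_intros)
  then have "connected (gam ` {0..1})" by (intro connected_continuous_image) auto
  moreover have "gam 0 \<in> gam ` {0..1}" "gam 1 \<in> gam ` {0..1}" by auto
  moreover have "gam 0 \<in> K" "gam 1 \<notin> K" using s t by (auto simp: gam_def)
  ultimately have "gam ` {0..1} \<inter> frontier K \<noteq> {}"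
    by (intro connected_Int_frontier) blast+
  then obtain l where l: "0 \<le> l" "l \<le> 1" "gam l \<in> frontier K" by auto
  define tau where "tau = (1 - l) * s + l * t"
  define u where "u = (1-l) *\<^sub>R w + l *\<^sub>R q"
  have "0 < tau"
  proof (cases "l = 0")
    case True then show ?thesis using s by (simp add: tau_def)
  next
    case False
    then have "0 < l * t" using l t by simp
    moreover have "0 \<le> (1 - l) * s" using l s by simp
    ultimately show ?thesis by (simp add: tau_def)
  qed
  moreover have "tau < d" unfolding tau_def using convex_lt[OF l(1,2) s(2) t(2)] .
  moreover have "norm (u - v) < e"
  proof -
    have "u - v = (1-l) *\<^sub>R (w - v) + l *\<^sub>R (q - v)" by (simp add: u_def algebra_simps)
    then have "norm (u - v) \<le> (1-l) * norm (w - v) + l * norm (q - v)"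
      using norm_triangle_ineq[of "(1-l) *\<^sub>R (w - v)" "l *\<^sub>R (q - v)"] l by simp
    also have "\<dots> < e" using convex_lt[OF l(1,2) s(3) t(3)] .
    finally show ?thesis .
  qed
  moreover have "x + tau *\<^sub>R u \<in> frontier K" using l(3) by (simp add: gam_def tau_def u_def)
  ultimately show "\<exists>t w. 0 < t \<and> t < d \<and> norm (w - v) < e \<and> x + t *\<^sub>R w \<in> frontier K" by blast
qed



lemma dirlem:
  fixes w a :: "'a::real_inner"
  assumes h: "\<forall>k. h k > 0" "h \<longlonglongrightarrow> 0" and ak: "ak \<longlonglongrightarrow> a" and l: "l \<ge> 0"
    and ev: "eventually (\<lambda>k. norm (w + h k *\<^sub>R ak k) \<ge> norm w - l * h k * norm (ak k)) sequentially"
  shows "w \<bullet> a + l * norm w * norm a \<ge> 0"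
proof (cases "w = 0")
  case True then show ?thesis by simp
next
  case False
  have "(\<lambda>k. l * h k * norm (ak k)) \<longlonglongrightarrow> l * 0 * norm a"
    by (intro tendsto_intros h ak)
  then have "eventually (\<lambda>k. l * h k * norm (ak k) < norm w) sequentially"
    using False by (intro order_tendstoD) auto
  with ev have ev2: "eventually (\<lambda>k. w \<bullet> ak k + h k * (norm (ak k))\<^sup>2 / 2 + l * norm w * norm (ak k) \<ge> 0) sequentially"
  proof eventually_elim
    case (elim k)
    define b where "b = ak k"
    define hh where "hh = h k"
    have hh: "hh > 0" using h by (simp add: hh_def)
    have X: "0 \<le> norm w - l * hh * norm b" "norm w - l * hh * norm b \<le> norm (w + hh *\<^sub>R b)"
      using elim by (auto simp: b_def hh_def)
    have "(norm w - l * hh * norm b)\<^sup>2 \<le> (norm (w + hh *\<^sub>R b))\<^sup>2"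
      using X by (intro power_mono) auto
    also have "(norm (w + hh *\<^sub>R b))\<^sup>2 = (norm w)\<^sup>2 + 2 * hh * (w \<bullet> b) + hh\<^sup>2 * (norm b)\<^sup>2"
      using dot_norm[of w "hh *\<^sub>R b"] by (simp add: power_mult_distrib abs_of_pos hh)
    finally have "0 \<le> hh * (2 * (w \<bullet> b) + hh * (norm b)\<^sup>2 + 2 * l * norm w * norm b) - l\<^sup>2 * hh\<^sup>2 * (norm b)\<^sup>2"
      by (simp add: power2_eq_square algebra_simps)
    moreover have "0 \<le> l\<^sup>2 * hh\<^sup>2 * (norm b)\<^sup>2" by simp
    ultimately have "0 \<le> hh * (2 * (w \<bullet> b) + hh * (norm b)\<^sup>2 + 2 * l * norm w * norm b)" by linarith
    then have "0 \<le> 2 * (w \<bullet> b) + hh * (norm b)\<^sup>2 + 2 * l * norm w * norm b"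
      using hh by (simp add: zero_le_mult_iff)
    then show ?case by (simp add: b_def hh_def)
  qed
  have "(\<lambda>k. w \<bullet> ak k + h k * (norm (ak k))\<^sup>2 / 2 + l * norm w * norm (ak k)) \<longlonglongrightarrow>
        w \<bullet> a + 0 * (norm a)\<^sup>2 / 2 + l * norm w * norm a"
    by (intro tendsto_intros h ak) simp
  from tendsto_lowerbound[OF this ev2] show ?thesis by simp
qed



lemma inter_lemma:
  fixes K C A :: "'a::euclidean_space set" and x :: 'a
  assumes clC: "closed C" and clA: "closed A" and AK: "A \<subseteq> frontier K"
    and KA: "frontier K - C \<subseteq> A" and KCA: "frontier K \<inter> frontier C \<subseteq> A"
    and N: "open N" "x \<in> N" and c: "c > 0" and al: "0 \<le> \<alpha>" "\<alpha> < 1"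
    and H: "\<forall>x1\<in>(frontier K - C) \<inter> N. \<forall>x2\<in>(frontier C - frontier K) \<inter> N.
           \<exists>v1\<in>contingent_cone (frontier K) x1. \<exists>v2\<in>contingent_cone C x2.
             norm (v1, v2) \<le> c * norm (x1 - x2) \<and>
             norm ((x2 - x1) - (v1 - v2)) \<le> \<alpha> * norm (x1 - x2)"
  shows "\<exists>r>0. \<exists>M. \<forall>x1\<in>A. \<forall>x2\<in>C. dist x1 x < r \<longrightarrow> dist x2 x < r \<longrightarrow>
           (\<exists>z\<in>A \<inter> C. norm (z - x1) \<le> M * norm (x1 - x2))"
proof -
  obtain R where R: "R > 0" "ball x R \<subseteq> N" using N open_contains_ball by blast
  define l where "l = min (1/2) ((1 - \<alpha>) / (4 * c))"
  have l0: "l > 0" using al c by (simp add: l_def)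
  have l1: "l \<le> 1/2" by (simp add: l_def)
  have "l \<le> (1 - \<alpha>) / (4 * c)" by (simp add: l_def)
  then have l2: "l * (4 * c) \<le> 1 - \<alpha>" using pos_le_divide_eq[of "4*c" l "1 - \<alpha>"] c by simp
  define r where "r = R * l / (l + 2)"
  have r0: "r > 0" using R l0 by (simp add: r_def)
  have rR1: "2 * r / l = 2 * R / (l + 2)" using l0 by (simp add: r_def)
  have rR2: "r + 2 * R / (l + 2) = (R * l + 2 * R) / (l + 2)" by (simp add: r_def add_divide_distrib)
  have rR3: "R * l + 2 * R = R * (l + 2)" by (simp add: algebra_simps)
  have rR: "r + 2 * r / l = R" using l0 unfolding rR1 rR2 rR3 by simp
  show ?thesis
  proof (rule exI[of _ r], intro conjI r0 exI[of _ "1 + 1/l"] ballI impI)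
    fix x1 x2 assume x1: "x1 \<in> A" and x2: "x2 \<in> C" and dx1: "dist x1 x < r" and dx2: "dist x2 x < r"
    define d0 where "d0 = norm (x1 - x2)"
    have Md0: "(1 + 1/l) * d0 = d0 + d0 / l" by (simp add: distrib_right)
    show "\<exists>z\<in>A \<inter> C. norm (z - x1) \<le> (1 + 1/l) * norm (x1 - x2)"
    proof (cases "d0 = 0")
      case True
      then have "x1 = x2" by (simp add: d0_def)
      then show ?thesis using x1 x2 by (intro bexI[of _ x1]) auto
    next
      case False
      then have d0p: "d0 > 0" by (simp add: d0_def)
      have "d0 = dist x1 x2" by (simp add: d0_def dist_norm)
      also have "\<dots> \<le> dist x1 x + dist x2 x" by (rule dist_triangle2)
      finally have d0r: "d0 < 2 * r" using dx1 dx2 by linarith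
      have d0l: "d0 / l < 2 * r / l" using d0r l0 by (intro divide_strict_right_mono) auto
      define S where "S = (A \<times> C) \<inter> (cball x1 (d0/l) \<times> cball x2 (d0/l))"
      define g where "g = (\<lambda>y::'a\<times>'a. norm (fst y - snd y) + l * (norm (fst y - x1) + norm (snd y - x2)))"
      have cS: "compact S" unfolding S_def
        by (intro closed_Int_compact closed_Times compact_Times compact_cball clA clC)
      have xS: "(x1,x2) \<in> S" using x1 x2 d0p l0 by (simp add: S_def)
      have "continuous_on S g" unfolding g_def by (intro continuous_intros)
      then obtain y where yS: "y \<in> S" and ymin: "\<forall>z\<in>S. g y \<le> g z"
        using continuous_attains_inf[OF cS _, of g] xS by blast
      have gx: "g (x1,x2) = d0" by (simp add: g_def d0_def)
      have gyd0: "g y \<le> d0" using ymin xS gx by metis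
      have gmin: "g y \<le> g (z1, z2)" if z: "z1 \<in> A" "z2 \<in> C" for z1 z2
      proof (cases "(z1,z2) \<in> S")
        case True then show ?thesis using ymin by blast
      next
        case False
        then have "d0/l < norm (z1 - x1) \<or> d0/l < norm (z2 - x2)"
          using z by (auto simp: S_def dist_norm norm_minus_commute)
        then have "d0 < l * norm (z1 - x1) + l * norm (z2 - x2)"
        proof
          assume a: "d0/l < norm (z1 - x1)"
          have "l * (d0/l) < l * norm (z1 - x1)" using a l0 by (intro mult_strict_left_mono) auto
          moreover have "0 \<le> l * norm (z2 - x2)" using l0 by simp
          moreover have "l * (d0/l) = d0" using l0 by simp
          ultimately show ?thesis by linarith
        next
          assume a: "d0/l < norm (z2 - x2)"
          have "l * (d0/l) < l * norm (z2 - x2)" using a l0 by (intro mult_strict_left_mono) auto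
          moreover have "0 \<le> l * norm (z1 - x1)" using l0 by simp
          moreover have "l * (d0/l) = d0" using l0 by simp
          ultimately show ?thesis by linarith
        qed
        then have "d0 < norm (z1 - z2) + (l * norm (z1 - x1) + l * norm (z2 - x2))"
          using norm_ge_zero[of "z1 - z2"] by linarith
        then have "d0 < g (z1, z2)" by (simp add: g_def distrib_left)
        then show ?thesis using gyd0 by simp
      qed
      obtain y1 y2 where y: "y = (y1, y2)" by (cases y)
      have y1A: "y1 \<in> A" and y2C: "y2 \<in> C" using yS by (auto simp: S_def y)
      define d where "d = norm (y1 - y2)"
      have gy: "d + (l * norm (y1 - x1) + l * norm (y2 - x2)) \<le> d0"
        using gyd0 by (simp add: g_def y d_def distrib_left)
      have "0 \<le> d" "0 \<le> l * norm (y1 - x1)" "0 \<le> l * norm (y2 - x2)" using l0 by (auto simp: d_def)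
      then have "l * norm (y1 - x1) \<le> d0" "l * norm (y2 - x2) \<le> d0" and dd0: "d \<le> d0" using gy by linarith+
      then have ny1: "norm (y1 - x1) \<le> d0 / l" and ny2: "norm (y2 - x2) \<le> d0 / l"
        using l0 by (simp_all add: pos_le_divide_eq mult.commute)
      have I1: "d - l * norm (z1 - y1) \<le> norm (z1 - y2)" if z: "z1 \<in> A" for z1
      proof -
        have "g y \<le> g (z1, y2)" using gmin z y2C by blast
        then have a: "d + (l * norm (y1 - x1) + l * norm (y2 - x2)) \<le> norm (z1 - y2) + (l * norm (z1 - x1) + l * norm (y2 - x2))"
          by (simp add: g_def y d_def distrib_left)
        have "norm (z1 - x1) \<le> norm (z1 - y1) + norm (y1 - x1)" using norm_triangle_ineq[of "z1 - y1" "y1 - x1"] by simp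
        then have "l * norm (z1 - x1) \<le> l * norm (z1 - y1) + l * norm (y1 - x1)"
          using l0 by (simp add: distrib_left[symmetric])
        with a show ?thesis by linarith
      qed
      have I2: "d - l * norm (z2 - y2) \<le> norm (y1 - z2)" if z: "z2 \<in> C" for z2
      proof -
        have "g y \<le> g (y1, z2)" using gmin z y1A by blast
        then have a: "d + (l * norm (y1 - x1) + l * norm (y2 - x2)) \<le> norm (y1 - z2) + (l * norm (y1 - x1) + l * norm (z2 - x2))"
          by (simp add: g_def y d_def distrib_left)
        have "norm (z2 - x2) \<le> norm (z2 - y2) + norm (y2 - x2)" using norm_triangle_ineq[of "z2 - y2" "y2 - x2"] by simp
        then have "l * norm (z2 - x2) \<le> l * norm (z2 - y2) + l * norm (y2 - x2)"
          using l0 by (simp add: distrib_left[symmetric])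
        with a show ?thesis by linarith
      qed
      have d0pos: "0 \<le> d0 / l" using d0p l0 by simp
      consider (a) "y1 \<in> C" | (b) "y2 \<in> A" | (c) "y1 \<notin> C" "y2 \<notin> A" by blast
      then show ?thesis
      proof cases
        case a
        show ?thesis
          using a y1A ny1 d0p Md0 by (intro bexI[of _ y1]) (auto simp: d0_def[symmetric])
      next
        case b
        have "norm (y2 - x1) \<le> norm (y2 - y1) + norm (y1 - x1)" using norm_triangle_ineq[of "y2 - y1" "y1 - x1"] by simp
        also have "\<dots> \<le> d0 + d0 / l" using dd0 ny1 by (simp add: d_def norm_minus_commute)
        finally show ?thesis using b y2C Md0 by (intro bexI[of _ y2]) (auto simp: d0_def[symmetric])
      next
        case c
        have "y1 \<noteq> y2" using c y2C by auto
        then have dpos: "d > 0" by (simp add: d_def)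
        have nint: "y2 \<notin> interior C"
        proof
          assume "y2 \<in> interior C"
          then obtain e where e: "e > 0" "ball y2 e \<subseteq> C" using mem_interior by blast
          define h where "h = min (1/2) (e / (2*d))"
          have h0: "h > 0" "h \<le> 1/2" using e dpos by (auto simp: h_def)
          have "h \<le> e / (2*d)" by (simp add: h_def)
          then have "h * (2 * d) \<le> e" using dpos by (simp add: pos_le_divide_eq)
          then have hd: "h * d \<le> e / 2" by (simp add: algebra_simps)
          define z2 where "z2 = y2 + h *\<^sub>R (y1 - y2)"
          have nz: "norm (z2 - y2) = h * d" using h0 by (simp add: z2_def d_def)
          then have "z2 \<in> C" using e hd by (intro subsetD[OF e(2)]) (simp add: dist_norm norm_minus_commute)
          have "y1 - z2 = (1 - h) *\<^sub>R (y1 - y2)" by (simp add: z2_def algebra_simps)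
          then have "norm (y1 - z2) = (1 - h) * d" using h0 by (simp add: d_def)
          with I2[OF \<open>z2 \<in> C\<close>] nz have "d - l * (h * d) \<le> (1 - h) * d" by simp
          then have "0 \<le> - (h * d * (1 - l))" by (simp add: algebra_simps)
          moreover have "h * d * (1 - l) > 0" using h0 dpos l1 by simp
          ultimately show False by simp
        qed
        have y2fC: "y2 \<in> frontier C" using y2C nint clC by (simp add: frontier_def closure_closed)
        have y2nK: "y2 \<notin> frontier K" using KCA y2fC c(2) by blast
        have y1K: "y1 \<in> frontier K" using AK y1A by blast
        have "dist y1 x \<le> dist y1 x1 + dist x1 x" by (rule dist_triangle)
        also have "\<dots> < R" using ny1 dx1 d0l rR by (simp add: dist_norm norm_minus_commute)
        finally have y1N: "y1 \<in> N" using R by (auto simp: dist_commute)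
        have "dist y2 x \<le> dist y2 x2 + dist x2 x" by (rule dist_triangle)
        also have "\<dots> < R" using ny2 dx2 d0l rR by (simp add: dist_norm norm_minus_commute)
        finally have y2N: "y2 \<in> N" using R by (auto simp: dist_commute)
        have m1: "y1 \<in> (frontier K - C) \<inter> N" using y1K c(1) y1N by blast
        have m2: "y2 \<in> (frontier C - frontier K) \<inter> N" using y2fC y2nK y2N by blast
        obtain v1 v2 where v1: "v1 \<in> contingent_cone (frontier K) y1" and v2: "v2 \<in> contingent_cone C y2"
          and vn: "norm (v1, v2) \<le> c * norm (y1 - y2)"
          and ve: "norm ((y2 - y1) - (v1 - v2)) \<le> \<alpha> * norm (y1 - y2)"
          using bspec[OF bspec[OF H m1] m2] by blast
        obtain hs a where hs: "\<forall>i. hs i > 0" "hs \<longlonglongrightarrow> 0" and a: "a \<longlonglongrightarrow> v1"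
          and aK: "\<forall>i. y1 + hs i *\<^sub>R a i \<in> frontier K"
          using v1 unfolding contingent_cone_def by blast
        have "(\<lambda>i. y1 + hs i *\<^sub>R a i) \<longlonglongrightarrow> y1 + 0 *\<^sub>R v1" by (intro tendsto_intros hs a)
        then have "eventually (\<lambda>i. y1 + hs i *\<^sub>R a i \<in> - C) sequentially"
          using clC c(1) by (intro topological_tendstoD) (auto simp: open_Compl)
        then have ev1: "eventually (\<lambda>i. norm (y1 - y2) - l * hs i * norm (a i) \<le> norm ((y1 - y2) + hs i *\<^sub>R a i)) sequentially"
        proof (rule eventually_mono)
          fix i assume "y1 + hs i *\<^sub>R a i \<in> - C"
          then have "y1 + hs i *\<^sub>R a i \<in> A" using KA aK by auto
          from I1[OF this] have "d - l * norm (y1 + hs i *\<^sub>R a i - y1) \<le> norm (y1 + hs i *\<^sub>R a i - y2)" .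
          moreover have "y1 + hs i *\<^sub>R a i - y2 = (y1 - y2) + hs i *\<^sub>R a i" by (simp add: algebra_simps)
          moreover have "norm (y1 + hs i *\<^sub>R a i - y1) = hs i * norm (a i)" using hs(1) by (simp add: abs_of_pos)
          ultimately show "norm (y1 - y2) - l * hs i * norm (a i) \<le> norm ((y1 - y2) + hs i *\<^sub>R a i)"
            by (simp add: d_def mult.assoc abs_of_pos[OF hs(1)[rule_format, of i]])
        qed
        have D1: "0 \<le> (y1 - y2) \<bullet> v1 + l * norm (y1 - y2) * norm v1"
          using dirlem[OF hs a less_imp_le[OF l0] ev1] .
        obtain ss b where ss: "\<forall>i. ss i > 0" "ss \<longlonglongrightarrow> 0" and b: "b \<longlonglongrightarrow> v2"
          and bC: "\<forall>i. y2 + ss i *\<^sub>R b i \<in> C"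
          using v2 unfolding contingent_cone_def by blast
        have mb: "(\<lambda>i. - b i) \<longlonglongrightarrow> - v2" using b by (rule tendsto_minus)
        have ev2: "eventually (\<lambda>i. norm (y1 - y2) - l * ss i * norm (- b i) \<le> norm ((y1 - y2) + ss i *\<^sub>R (- b i))) sequentially"
        proof (rule always_eventually, rule allI)
          fix i
          from I2[OF bC[rule_format, of i]] have "d - l * norm (y2 + ss i *\<^sub>R b i - y2) \<le> norm (y1 - (y2 + ss i *\<^sub>R b i))" .
          moreover have "y1 - (y2 + ss i *\<^sub>R b i) = (y1 - y2) + ss i *\<^sub>R (- b i)" by (simp add: algebra_simps)
          moreover have "norm (y2 + ss i *\<^sub>R b i - y2) = ss i * norm (- b i)" using ss(1) by (simp add: abs_of_pos)
          ultimately show "norm (y1 - y2) - l * ss i * norm (- b i) \<le> norm ((y1 - y2) + ss i *\<^sub>R (- b i))"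
            by (simp add: d_def mult.assoc abs_of_pos[OF ss(1)[rule_format, of i]])
        qed
        have D2: "0 \<le> (y1 - y2) \<bullet> (- v2) + l * norm (y1 - y2) * norm (- v2)"
          using dirlem[OF ss mb less_imp_le[OF l0] ev2] .
        have nv1: "norm v1 \<le> c * d" and nv2: "norm v2 \<le> c * d"
        proof -
          have "norm v1 \<le> norm (v1, v2)" "norm v2 \<le> norm (v1, v2)"
            by (simp_all add: norm_Pair real_sqrt_sum_squares_ge1 real_sqrt_sum_squares_ge2)
          then show "norm v1 \<le> c * d" "norm v2 \<le> c * d" using vn by (simp_all add: d_def)
        qed
        define w where "w = y1 - y2"
        have lo: "- (l * d * (norm v1 + norm v2)) \<le> w \<bullet> (v1 - v2)"
          using D1 D2 by (simp add: w_def d_def inner_diff_right algebra_simps)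
        have "l * d * (norm v1 + norm v2) \<le> l * d * (2 * c * d)"
          using nv1 nv2 l0 dpos by (intro mult_left_mono) auto
        with lo have lo2: "- (l * d * (2 * c * d)) \<le> w \<bullet> (v1 - v2)" by linarith
        have "w \<bullet> (v1 - v2) = w \<bullet> (y2 - y1) + w \<bullet> ((v1 - v2) - (y2 - y1))"
          by (simp add: inner_diff_right)
        also have "w \<bullet> (y2 - y1) = - (d * d)"
        proof -
          have e1: "y2 - y1 = - w" by (simp add: w_def)
          have e2: "w \<bullet> w = (norm w)\<^sup>2" by (simp add: power2_norm_eq_inner)
          show ?thesis unfolding e1 inner_minus_right e2 by (simp add: w_def d_def power2_eq_square)
        qed
        also have "w \<bullet> ((v1 - v2) - (y2 - y1)) \<le> d * (\<alpha> * d)"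
        proof -
          have "w \<bullet> ((v1 - v2) - (y2 - y1)) \<le> norm w * norm ((v1 - v2) - (y2 - y1))" by (rule norm_cauchy_schwarz)
          also have "\<dots> \<le> d * (\<alpha> * d)"
          proof -
            have "norm w = d" by (simp add: w_def d_def)
            moreover have "norm ((v1 - v2) - (y2 - y1)) \<le> \<alpha> * d"
              using ve norm_minus_commute[of "v1 - v2" "y2 - y1"] by (simp add: d_def)
            ultimately show ?thesis using dpos by (simp add: mult_left_mono)
          qed
          finally show ?thesis .
        qed
        finally have "- (l * d * (2 * c * d)) \<le> - (d * d) + d * (\<alpha> * d)" using lo2 by linarith
        then have "(d * d) * (1 - \<alpha>) \<le> (d * d) * (2 * l * c)" by (simp add: algebra_simps)
        then have "1 - \<alpha> \<le> 2 * l * c" using dpos by (simp add: mult_le_cancel_left_pos)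
        with l2 al have False by linarith
        then show ?thesis by blast
      qed
    qed
  qed
qed



lemma disjoint_intervals:
  fixes s1 u1 s2 u2 :: real
  assumes "s1 < u1" "s2 < u2" "{s1<..<u1} \<inter> {s2<..<u2} = {}"
  shows "u1 \<le> s2 \<or> u2 \<le> s1"
proof (rule ccontr)
  assume "\<not> (u1 \<le> s2 \<or> u2 \<le> s1)"
  then have "(max s1 s2 + min u1 u2) / 2 \<in> {s1<..<u1} \<inter> {s2<..<u2}" using assms(1,2)
    by (auto simp: max_def min_def)
  then show False using assms(3) by blast
qed

lemma ac_mono:
  fixes g :: "real \<Rightarrow> real"
  assumes ab: "a \<le> b" and ac: "abs_continuous_on_interval g a b" and Nn: "N \<in> null_sets lebesgue"
    and der: "\<forall>t\<in>{a<..<b} - N. \<exists>d\<le>0. (g has_real_derivative d) (at t within {a..b})"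
  shows "g b \<le> g a"
proof -
  have main: "g b - g a \<le> ep * (b - a) + ep" if ep: "ep > 0" for ep
  proof -
    have "\<exists>\<delta>>0. \<forall>(n::nat) (s::nat \<Rightarrow> real) (u::nat \<Rightarrow> real).
        (\<forall>i<n. a \<le> s i \<and> s i \<le> u i \<and> u i \<le> b) \<and>
        (\<forall>i<n. \<forall>j<n. i \<noteq> j \<longrightarrow> u i \<le> s j \<or> u j \<le> s i) \<and>
        (\<Sum>i<n. u i - s i) < \<delta>
        \<longrightarrow> (\<Sum>i<n. norm (g (u i) - g (s i))) < ep"
      using mp[OF spec[OF ac[unfolded abs_continuous_on_interval_def], of ep] ep] .
    then obtain \<delta> where \<delta>: "\<delta> > 0" and H\<delta>0: "\<forall>(n::nat) (s::nat \<Rightarrow> real) (u::nat \<Rightarrow> real).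
        (\<forall>i<n. a \<le> s i \<and> s i \<le> u i \<and> u i \<le> b) \<and>
        (\<forall>i<n. \<forall>j<n. i \<noteq> j \<longrightarrow> u i \<le> s j \<or> u j \<le> s i) \<and>
        (\<Sum>i<n. u i - s i) < \<delta>
        \<longrightarrow> (\<Sum>i<n. norm (g (u i) - g (s i))) < ep" by (elim exE conjE)
    have H\<delta>: "(\<Sum>i<n. norm (g (u i) - g (s i))) < ep"
      if "\<forall>i<n. a \<le> s i \<and> s i \<le> u i \<and> u i \<le> b" "\<forall>i<n. \<forall>j<n. i \<noteq> j \<longrightarrow> u i \<le> s j \<or> u j \<le> s i"
        "(\<Sum>i<n. u i - s i) < \<delta>" for n :: nat and s u :: "nat \<Rightarrow> real"
      using H\<delta>0[rule_format, of n s u] that by blast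
    define N' where "N' = N \<union> {a, b}"
    have N'n: "N' \<in> null_sets lebesgue"
      unfolding N'_def using Nn null_sets_completionI[OF finite_imp_null_set_lborel[of "{a,b}"]]
      by auto
    then have N'sets: "N' \<in> sets lebesgue" by auto
    obtain U where U: "open U" "N' \<subseteq> U" "(U - N') \<in> lmeasurable" "emeasure lebesgue (U - N') < ennreal \<delta>"
      using sets_lebesgue_outer_open[OF N'sets \<delta>] by blast
    have mU: "measure lebesgue (U - N') < \<delta>"
      using U(4) emeasure_eq_measure2[OF U(3)] \<delta> by (simp add: ennreal_less_iff)
    have "\<forall>t. \<exists>e>0. (t \<in> N' \<longrightarrow> ball t e \<subseteq> U) \<and>
        (t \<notin> N' \<and> t \<in> {a..b} \<longrightarrow> (\<forall>y\<in>{a..b}. \<bar>y - t\<bar> < e \<longrightarrow>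
            (t \<le> y \<longrightarrow> g y - g t \<le> ep * (y - t)) \<and> (y \<le> t \<longrightarrow> g t - g y \<le> ep * (t - y))))"
    proof
      fix t
      show "\<exists>e>0. (t \<in> N' \<longrightarrow> ball t e \<subseteq> U) \<and>
        (t \<notin> N' \<and> t \<in> {a..b} \<longrightarrow> (\<forall>y\<in>{a..b}. \<bar>y - t\<bar> < e \<longrightarrow>
            (t \<le> y \<longrightarrow> g y - g t \<le> ep * (y - t)) \<and> (y \<le> t \<longrightarrow> g t - g y \<le> ep * (t - y))))"
      proof (cases "t \<in> N'")
        case True
        then obtain e where "e > 0" "ball t e \<subseteq> U" using U(1,2) open_contains_ball by blast
        then show ?thesis using True by blast
      next
        case False
        show ?thesis
        proof (cases "t \<in> {a..b}")
          case False2: False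
          then show ?thesis using False by (intro exI[of _ 1]) auto
        next
          case True
          then have "t \<in> {a<..<b} - N" using False by (auto simp: N'_def)
          then obtain d where d: "d \<le> 0" "(g has_real_derivative d) (at t within {a..b})" using der by blast
          then have "((\<lambda>y. (g y - g t) / (y - t)) \<longlongrightarrow> d) (at t within {a..b})"
            by (simp add: has_field_derivative_iff)
          then have "eventually (\<lambda>y. dist ((g y - g t) / (y - t)) d < ep) (at t within {a..b})"
            using ep by (rule tendstoD)
          then obtain e where e: "e > 0" and eH: "\<And>y. y \<in> {a..b} \<Longrightarrow> y \<noteq> t \<Longrightarrow> dist y t < e \<Longrightarrow>
              dist ((g y - g t) / (y - t)) d < ep"
            unfolding eventually_at by blast
          have "\<forall>y\<in>{a..b}. \<bar>y - t\<bar> < e \<longrightarrow>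
            (t \<le> y \<longrightarrow> g y - g t \<le> ep * (y - t)) \<and> (y \<le> t \<longrightarrow> g t - g y \<le> ep * (t - y))"
          proof (intro ballI impI conjI)
            fix y assume y: "y \<in> {a..b}" "\<bar>y - t\<bar> < e"
            show "t \<le> y \<Longrightarrow> g y - g t \<le> ep * (y - t)"
            proof -
              assume ty: "t \<le> y"
              show ?thesis
              proof (cases "y = t")
                case True then show ?thesis by simp
              next
                case False
                define q where "q = (g y - g t) / (y - t)"
                have "\<bar>q - d\<bar> < ep" using eH[OF y(1) False] y(2) by (simp add: q_def dist_real_def)
                then have "q \<le> ep" using d(1) by linarith
                moreover have "g y - g t = q * (y - t)" using False by (simp add: q_def)
                ultimately show ?thesis using ty by (simp add: mult_right_mono)
              qed
            qed
            show "y \<le> t \<Longrightarrow> g t - g y \<le> ep * (t - y)"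
            proof -
              assume ty: "y \<le> t"
              show ?thesis
              proof (cases "y = t")
                case True then show ?thesis by simp
              next
                case False
                define q where "q = (g y - g t) / (y - t)"
                have "\<bar>q - d\<bar> < ep" using eH[OF y(1) False] y(2) by (simp add: q_def dist_real_def)
                then have "q \<le> ep" using d(1) by linarith
                moreover have "g t - g y = q * (t - y)" using False by (simp add: q_def field_simps)
                ultimately show ?thesis using ty by (simp add: mult_right_mono)
              qed
            qed
          qed
          then show ?thesis using e False by blast
        qed
      qed
    qed
    then have "\<exists>e. \<forall>t. e t > 0 \<and> (t \<in> N' \<longrightarrow> ball t (e t) \<subseteq> U) \<and>
        (t \<notin> N' \<and> t \<in> {a..b} \<longrightarrow> (\<forall>y\<in>{a..b}. \<bar>y - t\<bar> < e t \<longrightarrow>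
            (t \<le> y \<longrightarrow> g y - g t \<le> ep * (y - t)) \<and> (y \<le> t \<longrightarrow> g t - g y \<le> ep * (t - y))))"
      by (rule choice)
    then obtain e where eall: "\<forall>t. e t > 0 \<and> (t \<in> N' \<longrightarrow> ball t (e t) \<subseteq> U) \<and>
        (t \<notin> N' \<and> t \<in> {a..b} \<longrightarrow> (\<forall>y\<in>{a..b}. \<bar>y - t\<bar> < e t \<longrightarrow>
            (t \<le> y \<longrightarrow> g y - g t \<le> ep * (y - t)) \<and> (y \<le> t \<longrightarrow> g t - g y \<le> ep * (t - y))))"
      by (elim exE)
    have e: "\<And>t. e t > 0" using eall by blast
    have eU: "\<And>t. t \<in> N' \<Longrightarrow> ball t (e t) \<subseteq> U" using eall by blast
    have eD: "\<And>t y. t \<notin> N' \<Longrightarrow> t \<in> {a..b} \<Longrightarrow> y \<in> {a..b} \<Longrightarrow> \<bar>y - t\<bar> < e t \<Longrightarrow>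
            (t \<le> y \<longrightarrow> g y - g t \<le> ep * (y - t)) \<and> (y \<le> t \<longrightarrow> g t - g y \<le> ep * (t - y))"
      using eall by blast
    have "gauge (\<lambda>t. ball t (e t))" using e by (intro gauge_ball_dependent) auto
    then obtain p where p: "p tagged_division_of {a..b}" and fine: "(\<lambda>t. ball t (e t)) fine p"
      by (rule fine_division_exists_real)
    have fp: "finite p" using p by (rule tagged_division_of_finite)
    have elt: "Inf K \<le> t \<and> t \<le> Sup K \<and> a \<le> Inf K \<and> Sup K \<le> b \<and> K = {Inf K..Sup K} \<and> K \<subseteq> ball t (e t)"
      if tK: "(t, K) \<in> p" for t K
    proof -
      have tK1: "t \<in> K" "K \<subseteq> {a..b}" using tagged_division_ofD(2,3)[OF p tK] by auto
      obtain s u where su: "K = cbox s u" using tagged_division_ofD(4)[OF p tK] by blast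
      have K: "K = {s..u}" using su by simp
      then have "s \<le> u" using tK1(1) by auto
      then have "Inf K = s" "Sup K = u" using K by auto
      moreover have "K \<subseteq> ball t (e t)" using fine tK by (auto simp: fine_def)
      ultimately show ?thesis using tK1 K by auto
    qed
    have sum_g: "(\<Sum>(t,K)\<in>p. g (Sup K) - g (Inf K)) = g b - g a"
      using additive_tagged_division_1[OF ab p, of g] .
    have sum_id: "(\<Sum>(t,K)\<in>p. Sup K - Inf K) = b - a"
      using additive_tagged_division_1[OF ab p, of "\<lambda>x. x"] by simp
    define p1 where "p1 = {tK \<in> p. fst tK \<in> N'}"
    define p2 where "p2 = {tK \<in> p. fst tK \<notin> N'}"
    have fp1: "finite p1" and fp2: "finite p2" using fp by (auto simp: p1_def p2_def)
    have split: "(\<Sum>(t,K)\<in>p. g (Sup K) - g (Inf K)) = (\<Sum>(t,K)\<in>p1. g (Sup K) - g (Inf K)) + (\<Sum>(t,K)\<in>p2. g (Sup K) - g (Inf K))"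
    proof -
      have "p = p1 \<union> p2" "p1 \<inter> p2 = {}" by (auto simp: p1_def p2_def)
      then show ?thesis using sum.union_disjoint[OF fp1 fp2] by simp
    qed
    have bound2: "(\<Sum>(t,K)\<in>p2. g (Sup K) - g (Inf K)) \<le> ep * (b - a)"
    proof -
      have "(\<Sum>(t,K)\<in>p2. g (Sup K) - g (Inf K)) \<le> (\<Sum>(t,K)\<in>p2. ep * (Sup K - Inf K))"
      proof (rule sum_mono)
        fix tK assume tK: "tK \<in> p2"
        obtain t K where tKe: "tK = (t, K)" by (cases tK)
        have inp: "(t,K) \<in> p" and tN: "t \<notin> N'" using tK by (auto simp: p2_def tKe)
        note E = elt[OF inp]
        have ta: "t \<in> {a..b}" using E by auto
        have "Sup K \<in> K" "Inf K \<in> K" using E by auto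
        then have d1: "\<bar>Sup K - t\<bar> < e t" "\<bar>Inf K - t\<bar> < e t" using E by (auto simp: dist_real_def abs_minus_commute)
        have "g (Sup K) - g t \<le> ep * (Sup K - t)" using eD[OF tN ta _ d1(1)] E by auto
        moreover have "g t - g (Inf K) \<le> ep * (t - Inf K)" using eD[OF tN ta _ d1(2)] E by auto
        ultimately show "(case tK of (t, K) \<Rightarrow> g (Sup K) - g (Inf K)) \<le> (case tK of (t, K) \<Rightarrow> ep * (Sup K - Inf K))"
          by (simp add: tKe algebra_simps)
      qed
      also have "\<dots> = ep * (\<Sum>(t,K)\<in>p2. Sup K - Inf K)"
        by (simp add: sum_distrib_left case_prod_unfold)
      also have "(\<Sum>(t,K)\<in>p2. Sup K - Inf K) \<le> (\<Sum>(t,K)\<in>p. Sup K - Inf K)"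
      proof (rule sum_mono2[OF fp])
        show "p2 \<subseteq> p" by (auto simp: p2_def)
        fix tK assume "tK \<in> p - p2"
        then have "tK \<in> p" by auto
        then show "0 \<le> (case tK of (t, K) \<Rightarrow> Sup K - Inf K)" using elt by (cases tK) force
      qed
      then have "ep * (\<Sum>(t,K)\<in>p2. Sup K - Inf K) \<le> ep * (b - a)" using ep sum_id by (simp add: mult_left_mono)
      finally show ?thesis .
    qed
    define p1' where "p1' = {tK \<in> p1. Inf (snd tK) < Sup (snd tK)}"
    have fp1': "finite p1'" using fp1 by (auto simp: p1'_def)
    have p1'sub: "p1' \<subseteq> p" by (auto simp: p1'_def p1_def)
    have s1: "(\<Sum>(t,K)\<in>p1. g (Sup K) - g (Inf K)) = (\<Sum>(t,K)\<in>p1'. g (Sup K) - g (Inf K))"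
    proof (rule sum.mono_neutral_right[OF fp1])
      show "p1' \<subseteq> p1" by (auto simp: p1'_def)
      show "\<forall>i\<in>p1 - p1'. (case i of (t, K) \<Rightarrow> g (Sup K) - g (Inf K)) = 0"
      proof
        fix tK assume tK: "tK \<in> p1 - p1'"
        obtain t K where tKe: "tK = (t, K)" by (cases tK)
        have "(t,K) \<in> p" using tK by (auto simp: p1_def tKe)
        then have "Inf K \<le> Sup K" using elt by force
        moreover have "\<not> Inf K < Sup K" using tK by (auto simp: p1'_def p1_def tKe)
        ultimately have "Inf K = Sup K" by simp
        then show "(case tK of (t, K) \<Rightarrow> g (Sup K) - g (Inf K)) = 0" by (simp add: tKe)
      qed
    qed
    have s2: "(\<Sum>(t,K)\<in>p1'. g (Sup K) - g (Inf K)) \<le> (\<Sum>(t,K)\<in>p1'. norm (g (Sup K) - g (Inf K)))"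
      by (rule sum_mono) (auto simp: case_prod_unfold)
    obtain hb where hb: "bij_betw hb {0..<card p1'} p1'" using ex_bij_betw_nat_finite[OF fp1'] by blast
    define n where "n = card p1'"
    define s where "s = (\<lambda>i. Inf (snd (hb i)))"
    define u where "u = (\<lambda>i. Sup (snd (hb i)))"
    have hbin: "hb i \<in> p1'" if "i < n" for i using hb that by (auto simp: bij_betw_def n_def)
    have hbp: "hb i \<in> p" if "i < n" for i using hbin[OF that] p1'sub by blast
    have c1: "\<forall>i<n. a \<le> s i \<and> s i \<le> u i \<and> u i \<le> b"
    proof (intro allI impI)
      fix i assume i: "i < n"
      obtain t K where tKe: "hb i = (t, K)" by (cases "hb i")
      show "a \<le> s i \<and> s i \<le> u i \<and> u i \<le> b" using elt[of t K] hbp[OF i] by (auto simp: s_def u_def tKe)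
    qed
    have slu: "s i < u i" if "i < n" for i using hbin[OF that] by (auto simp: p1'_def s_def u_def)
    have c2: "\<forall>i<n. \<forall>j<n. i \<noteq> j \<longrightarrow> u i \<le> s j \<or> u j \<le> s i"
    proof (intro allI impI)
      fix i j assume i: "i < n" and j: "j < n" and ij: "i \<noteq> j"
      have "hb i \<noteq> hb j" using hb i j ij by (auto simp: bij_betw_def inj_on_def n_def)
      obtain t1 K1 where e1: "hb i = (t1, K1)" by (cases "hb i")
      obtain t2 K2 where e2: "hb j = (t2, K2)" by (cases "hb j")
      have "interior K1 \<inter> interior K2 = {}"
        using tagged_division_ofD(5)[OF p, of t1 K1 t2 K2] hbp[OF i] hbp[OF j] \<open>hb i \<noteq> hb j\<close> e1 e2 by auto
      moreover have "K1 = {s i..u i}" "K2 = {s j..u j}" using elt[of t1 K1] elt[of t2 K2] hbp[OF i] hbp[OF j] e1 e2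
        by (auto simp: s_def u_def)
      ultimately have "{s i<..<u i} \<inter> {s j<..<u j} = {}" by (simp add: interior_atLeastAtMost_real)
      then show "u i \<le> s j \<or> u j \<le> s i" using disjoint_intervals slu[OF i] slu[OF j] by blast
    qed
    have reidx: "(\<Sum>i<n. f (hb i)) = (\<Sum>tK\<in>p1'. f tK)" for f :: "real \<times> real set \<Rightarrow> real"
      using sum.reindex_bij_betw[OF hb, of f] by (simp add: n_def atLeast0LessThan)
    have c3: "(\<Sum>i<n. u i - s i) < \<delta>"
    proof -
      have "(\<Sum>i<n. u i - s i) = (\<Sum>tK\<in>p1'. Sup (snd tK) - Inf (snd tK))"
        using reidx[of "\<lambda>tK. Sup (snd tK) - Inf (snd tK)"] by (simp add: s_def u_def)
      also have "\<dots> = (\<Sum>tK\<in>p1'. measure lebesgue {Inf (snd tK)<..<Sup (snd tK)})"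
        by (rule sum.cong) (auto simp: p1'_def)
      also have "\<dots> = measure lebesgue (\<Union>tK\<in>p1'. {Inf (snd tK)<..<Sup (snd tK)})"
      proof (rule measure_negligible_finite_Union_image[symmetric, OF fp1'])
        show "\<And>tK. tK \<in> p1' \<Longrightarrow> {Inf (snd tK)<..<Sup (snd tK)} \<in> lmeasurable" by simp
        show "pairwise (\<lambda>x y. negligible ({Inf (snd x)<..<Sup (snd x)} \<inter> {Inf (snd y)<..<Sup (snd y)})) p1'"
        proof (rule pairwiseI)
          fix x y assume x: "x \<in> p1'" and y: "y \<in> p1'" and xy: "x \<noteq> y"
          obtain t1 K1 where e1: "x = (t1, K1)" by (cases x)
          obtain t2 K2 where e2: "y = (t2, K2)" by (cases y)
          have "interior K1 \<inter> interior K2 = {}"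
            using tagged_division_ofD(5)[OF p, of t1 K1 t2 K2] x y xy p1'sub e1 e2 by auto
          moreover have "K1 = {Inf K1..Sup K1}" "K2 = {Inf K2..Sup K2}" using elt[of t1 K1] elt[of t2 K2] x y p1'sub e1 e2
            by auto
          ultimately have "{Inf K1<..<Sup K1} \<inter> {Inf K2<..<Sup K2} = {}"
            by (metis interior_atLeastAtMost_real)
          then show "negligible ({Inf (snd x)<..<Sup (snd x)} \<inter> {Inf (snd y)<..<Sup (snd y)})"
            by (simp add: e1 e2)
        qed
      qed
      also have "\<dots> \<le> measure lebesgue ((U - N') \<union> N')"
      proof (rule measure_mono_fmeasurable)
        show "(\<Union>tK\<in>p1'. {Inf (snd tK)<..<Sup (snd tK)}) \<subseteq> (U - N') \<union> N'"
        proof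
          fix y assume "y \<in> (\<Union>tK\<in>p1'. {Inf (snd tK)<..<Sup (snd tK)})"
          then obtain tK where tK0: "tK \<in> p1'" and y0: "y \<in> {Inf (snd tK)<..<Sup (snd tK)}" by blast
          obtain t K where tKe: "tK = (t, K)" by (cases tK)
          have tK: "(t, K) \<in> p1'" and y: "y \<in> {Inf K<..<Sup K}" using tK0 y0 by (auto simp: tKe)
          have tN: "t \<in> N'" and inp: "(t,K) \<in> p" using tK by (auto simp: p1'_def p1_def)
          have "y \<in> K" using elt[OF inp] y by auto
          then have "y \<in> ball t (e t)" using elt[OF inp] by auto
          then show "y \<in> (U - N') \<union> N'" using eU[OF tN] by auto
        qed
        show "(\<Union>tK\<in>p1'. {Inf (snd tK)<..<Sup (snd tK)}) \<in> sets lebesgue" by (intro sets.finite_UN fp1') auto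
        show "(U - N') \<union> N' \<in> fmeasurable lebesgue"
          using U(3) fmeasurableI_null_sets[OF N'n] by (rule fmeasurable.Un)
      qed
      also have "\<dots> \<le> measure lebesgue (U - N') + measure lebesgue N'"
        using U(3) N'sets by (intro measure_Un_le) auto
      also have "measure lebesgue N' = 0" using N'n by (simp add: measure_eq_0_null_sets)
      finally show ?thesis using mU by simp
    qed
    have "(\<Sum>i<n. norm (g (u i) - g (s i))) < ep" using H\<delta>[OF c1 c2 c3] .
    moreover have "(\<Sum>i<n. norm (g (u i) - g (s i))) = (\<Sum>(t,K)\<in>p1'. norm (g (Sup K) - g (Inf K)))"
      using reidx[of "\<lambda>tK. norm (g (Sup (snd tK)) - g (Inf (snd tK)))"] by (simp add: s_def u_def case_prod_unfold)
    ultimately have bound1: "(\<Sum>(t,K)\<in>p1. g (Sup K) - g (Inf K)) < ep" using s1 s2 by linarith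
    show ?thesis using sum_g split bound1 bound2 by linarith
  qed
  show ?thesis
  proof (rule ccontr)
    assume "\<not> g b \<le> g a"
    then have D: "g b - g a > 0" by simp
    define ep where "ep = (g b - g a) / (2 * (b - a + 1))"
    have ba: "b - a + 1 > 0" using ab by simp
    have ep0: "ep > 0" using D ba by (simp add: ep_def)
    have aux: "\<And>X Y :: real. Y > 0 \<Longrightarrow> (X / (2 * Y)) * Y = X / 2" by (simp add: field_simps)
    have "ep * (b - a) + ep = ep * (b - a + 1)" by (simp add: algebra_simps)
    also have "\<dots> = (g b - g a) / 2" unfolding ep_def using aux[OF ba] .
    finally have "ep * (b - a) + ep = (g b - g a) / 2" .
    then have "g b - g a \<le> (g b - g a) / 2" using main[OF ep0] by simp
    then show False using D by (simp add: field_simps)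
  qed
qed



lemma ac_affine:
  fixes f :: "real \<Rightarrow> 'a::real_inner"
  assumes ac: "abs_continuous_on_interval f lo hi"
  shows "abs_continuous_on_interval (\<lambda>s. \<beta> * s - p \<bullet> f s) lo hi"
  unfolding abs_continuous_on_interval_def
proof (intro allI impI)
  fix \<epsilon> :: real assume \<epsilon>: "\<epsilon> > 0"
  define \<epsilon>1 where "\<epsilon>1 = \<epsilon> / (2 * (norm p + 1))"
  have np: "2 * (norm p + 1) > 0" by (simp add: add_nonneg_pos)
  have \<epsilon>1: "\<epsilon>1 > 0" unfolding \<epsilon>1_def using \<epsilon> np by (rule divide_pos_pos)
  have "\<exists>\<delta>>0. \<forall>(n::nat) (s::nat \<Rightarrow> real) (u::nat \<Rightarrow> real).
        (\<forall>i<n. lo \<le> s i \<and> s i \<le> u i \<and> u i \<le> hi) \<and>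
        (\<forall>i<n. \<forall>j<n. i \<noteq> j \<longrightarrow> u i \<le> s j \<or> u j \<le> s i) \<and>
        (\<Sum>i<n. u i - s i) < \<delta>
        \<longrightarrow> (\<Sum>i<n. norm (f (u i) - f (s i))) < \<epsilon>1"
    using mp[OF spec[OF ac[unfolded abs_continuous_on_interval_def], of \<epsilon>1] \<epsilon>1] .
  then obtain \<delta>1 where \<delta>1: "\<delta>1 > 0" and H: "\<forall>(n::nat) (s::nat \<Rightarrow> real) (u::nat \<Rightarrow> real).
        (\<forall>i<n. lo \<le> s i \<and> s i \<le> u i \<and> u i \<le> hi) \<and>
        (\<forall>i<n. \<forall>j<n. i \<noteq> j \<longrightarrow> u i \<le> s j \<or> u j \<le> s i) \<and>
        (\<Sum>i<n. u i - s i) < \<delta>1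
        \<longrightarrow> (\<Sum>i<n. norm (f (u i) - f (s i))) < \<epsilon>1" by (elim exE conjE)
  define \<delta> where "\<delta> = min \<delta>1 (\<epsilon> / (2 * (\<bar>\<beta>\<bar> + 1)))"
  have nb: "2 * (\<bar>\<beta>\<bar> + 1) > 0" by (simp add: add_nonneg_pos)
  have "\<epsilon> / (2 * (\<bar>\<beta>\<bar> + 1)) > 0" using \<epsilon> nb by (rule divide_pos_pos)
  then have \<delta>: "\<delta> > 0" using \<delta>1 by (simp add: \<delta>_def)
  show "\<exists>\<delta>>0. \<forall>(n::nat) (s::nat \<Rightarrow> real) (u::nat \<Rightarrow> real).
        (\<forall>i<n. lo \<le> s i \<and> s i \<le> u i \<and> u i \<le> hi) \<and>
        (\<forall>i<n. \<forall>j<n. i \<noteq> j \<longrightarrow> u i \<le> s j \<or> u j \<le> s i) \<and>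
        (\<Sum>i<n. u i - s i) < \<delta>
        \<longrightarrow> (\<Sum>i<n. norm ((\<beta> * u i - p \<bullet> f (u i)) - (\<beta> * s i - p \<bullet> f (s i)))) < \<epsilon>"
  proof (intro exI[of _ \<delta>] conjI \<delta> allI impI)
    fix n :: nat and s u :: "nat \<Rightarrow> real"
    assume A: "(\<forall>i<n. lo \<le> s i \<and> s i \<le> u i \<and> u i \<le> hi) \<and>
        (\<forall>i<n. \<forall>j<n. i \<noteq> j \<longrightarrow> u i \<le> s j \<or> u j \<le> s i) \<and> (\<Sum>i<n. u i - s i) < \<delta>"
    have S1: "(\<Sum>i<n. norm (f (u i) - f (s i))) < \<epsilon>1"
      using H[rule_format, of n s u] A by (simp add: \<delta>_def)
    have S2: "(\<Sum>i<n. u i - s i) \<le> \<epsilon> / (2 * (\<bar>\<beta>\<bar> + 1))" using A by (simp add: \<delta>_def)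
    have "(\<Sum>i<n. norm ((\<beta> * u i - p \<bullet> f (u i)) - (\<beta> * s i - p \<bullet> f (s i))))
        \<le> (\<Sum>i<n. \<bar>\<beta>\<bar> * (u i - s i) + norm p * norm (f (u i) - f (s i)))"
    proof (rule sum_mono)
      fix i assume "i \<in> {..<n}"
      then have su: "s i \<le> u i" using A by auto
      have "(\<beta> * u i - p \<bullet> f (u i)) - (\<beta> * s i - p \<bullet> f (s i)) = \<beta> * (u i - s i) - p \<bullet> (f (u i) - f (s i))"
        by (simp add: algebra_simps inner_diff_right)
      then have "norm ((\<beta> * u i - p \<bullet> f (u i)) - (\<beta> * s i - p \<bullet> f (s i))) \<le> \<bar>\<beta> * (u i - s i)\<bar> + \<bar>p \<bullet> (f (u i) - f (s i))\<bar>"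
        by (simp add: abs_triangle_ineq4)
      also have "\<dots> \<le> \<bar>\<beta>\<bar> * (u i - s i) + norm p * norm (f (u i) - f (s i))"
        using su Cauchy_Schwarz_ineq2[of p "f (u i) - f (s i)"] by (simp add: abs_mult)
      finally show "norm ((\<beta> * u i - p \<bullet> f (u i)) - (\<beta> * s i - p \<bullet> f (s i))) \<le> \<bar>\<beta>\<bar> * (u i - s i) + norm p * norm (f (u i) - f (s i))" .
    qed
    also have "\<dots> = \<bar>\<beta>\<bar> * (\<Sum>i<n. u i - s i) + norm p * (\<Sum>i<n. norm (f (u i) - f (s i)))"
      by (simp add: sum.distrib sum_distrib_left)
    also have "\<dots> < \<epsilon>"
    proof -
      have "\<bar>\<beta>\<bar> * (\<Sum>i<n. u i - s i) \<le> \<bar>\<beta>\<bar> * (\<epsilon> / (2 * (\<bar>\<beta>\<bar> + 1)))"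
        using S2 by (intro mult_left_mono) auto
      also have "\<dots> \<le> \<epsilon> / 2"
      proof -
        have "\<bar>\<beta>\<bar> * (\<epsilon> / (2 * (\<bar>\<beta>\<bar> + 1))) = (\<epsilon> / 2) * (\<bar>\<beta>\<bar> / (\<bar>\<beta>\<bar> + 1))" by (simp add: field_simps)
        also have "\<dots> \<le> (\<epsilon> / 2) * 1" using \<epsilon> by (intro mult_left_mono) auto
        finally show ?thesis by simp
      qed
      finally have b1: "\<bar>\<beta>\<bar> * (\<Sum>i<n. u i - s i) \<le> \<epsilon> / 2" .
      have "norm p * (\<Sum>i<n. norm (f (u i) - f (s i))) \<le> norm p * \<epsilon>1"
        using S1 by (intro mult_left_mono) auto
      also have "\<dots> < \<epsilon> / 2"
      proof -
        have "norm p * \<epsilon>1 = (\<epsilon> / 2) * (norm p / (norm p + 1))" by (simp add: \<epsilon>1_def field_simps)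
        also have "\<dots> < (\<epsilon> / 2) * 1"
        proof (intro mult_strict_left_mono)
          have "norm p + 1 > 0" by (simp add: add_nonneg_pos)
          then show "norm p / (norm p + 1) < 1" by (simp add: divide_less_eq)
        qed (use \<epsilon> in auto)
        finally show ?thesis by simp
      qed
      finally show ?thesis using b1 by linarith
    qed
    finally show "(\<Sum>i<n. norm ((\<beta> * u i - p \<bullet> f (u i)) - (\<beta> * s i - p \<bullet> f (s i)))) < \<epsilon>" .
  qed
qed



lemma speeds_in_F:
  fixes C :: "'a::euclidean_space set" and F :: "'a \<Rightarrow> 'a set" and \<phi> :: "real \<Rightarrow> 'a"
  assumes SA: "standing_assumption C F" and sol: "is_solution C F \<phi> D" and x: "\<phi> 0 = x" "x \<in> C"
    and T: "T > 0" "{0..T} \<subseteq> D"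
    and v: "v \<in> initial_speeds \<phi> D"
  shows "v \<in> F x"
proof (rule ccontr)
  assume vF: "v \<notin> F x"
  have Fx: "F x \<noteq> {}" "closed (F x)" "convex (F x)" using SA x(2) by (auto simp: standing_assumption_def)
  have cont: "sv_continuous F" using SA by (simp add: standing_assumption_def)
  have lac: "loc_abs_continuous_on D \<phi>" and inC: "\<forall>t\<in>D. \<phi> t \<in> C"
    and AE: "AE t in lebesgue. t \<in> D \<longrightarrow> (\<exists>v. (\<phi> has_vector_derivative v) (at t within D) \<and> v \<in> F (\<phi> t))"
    using sol by (auto simp: is_solution_def)
  obtain N where N1: "{t \<in> space lebesgue. \<not> (t \<in> D \<longrightarrow> (\<exists>v. (\<phi> has_vector_derivative v) (at t within D) \<and> v \<in> F (\<phi> t)))} \<subseteq> N"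
    and N2: "emeasure lebesgue N = 0" and N3: "N \<in> sets lebesgue"
    using AE_E[OF AE] by blast
  have Nn: "N \<in> null_sets lebesgue" using N2 N3 by (rule null_setsI)
  have NH: "\<exists>v. (\<phi> has_vector_derivative v) (at t within D) \<and> v \<in> F (\<phi> t)" if "t \<notin> N" "t \<in> D" for t
    using N1 that by auto
  obtain a \<beta> where a1: "a \<bullet> v < \<beta>" and a2: "\<forall>w\<in>F x. \<beta> < a \<bullet> w"
    using separating_hyperplane_closed_point[OF Fx(3) Fx(2) vF] by blast
  define U where "U = {w. \<beta> < a \<bullet> w}"
  have oU: "open U" unfolding U_def by (rule open_halfspace_gt)
  have FU: "F x \<subseteq> U" using a2 by (auto simp: U_def)
  have "x \<in> sv_dom F" using Fx(1) by (simp add: sv_dom_def)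
  then have "sv_usc_at F x" using cont by (simp add: sv_continuous_def)
  then obtain \<eta> where \<eta>: "\<eta> > 0" and \<eta>U: "\<forall>y\<in>ball x \<eta>. F y \<subseteq> U"
    unfolding sv_usc_at_def using oU FU by blast
  have acT: "abs_continuous_on_interval \<phi> 0 T" using lac T by (simp add: loc_abs_continuous_on_def)
  have "\<exists>\<delta>>0. \<forall>(n::nat) (s::nat \<Rightarrow> real) (u::nat \<Rightarrow> real).
        (\<forall>i<n. 0 \<le> s i \<and> s i \<le> u i \<and> u i \<le> T) \<and>
        (\<forall>i<n. \<forall>j<n. i \<noteq> j \<longrightarrow> u i \<le> s j \<or> u j \<le> s i) \<and>
        (\<Sum>i<n. u i - s i) < \<delta>
        \<longrightarrow> (\<Sum>i<n. norm (\<phi> (u i) - \<phi> (s i))) < \<eta>"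
    using mp[OF spec[OF acT[unfolded abs_continuous_on_interval_def], of \<eta>] \<eta>] .
  then obtain \<delta>0 where \<delta>0: "\<delta>0 > 0" and H0: "\<forall>(n::nat) (s::nat \<Rightarrow> real) (u::nat \<Rightarrow> real).
        (\<forall>i<n. 0 \<le> s i \<and> s i \<le> u i \<and> u i \<le> T) \<and>
        (\<forall>i<n. \<forall>j<n. i \<noteq> j \<longrightarrow> u i \<le> s j \<or> u j \<le> s i) \<and>
        (\<Sum>i<n. u i - s i) < \<delta>0
        \<longrightarrow> (\<Sum>i<n. norm (\<phi> (u i) - \<phi> (s i))) < \<eta>" by (elim exE conjE)
  have near: "\<phi> t \<in> ball x \<eta>" if "0 \<le> t" "t \<le> T" "t < \<delta>0" for t
  proof -
    have "(\<Sum>i<Suc 0. norm (\<phi> ((\<lambda>_. t) i) - \<phi> ((\<lambda>_. 0) i))) < \<eta>"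
      using H0[rule_format, of "Suc 0" "\<lambda>_. 0" "\<lambda>_. t"] that by auto
    then show ?thesis using x(1) by (simp add: dist_norm norm_minus_commute)
  qed
  define \<tau> where "\<tau> = min T (\<delta>0 / 2)"
  have \<tau>: "\<tau> > 0" "\<tau> \<le> T" "\<tau> < \<delta>0" using T \<delta>0 by (auto simp: \<tau>_def)
  obtain ts where ts: "\<forall>i. ts i > 0 \<and> ts i \<in> D" "ts \<longlonglongrightarrow> 0"
    and q: "(\<lambda>i. (\<phi> (ts i) - \<phi> 0) /\<^sub>R ts i) \<longlonglongrightarrow> v"
    using v unfolding initial_speeds_def by blast
  have key: "\<beta> \<le> a \<bullet> ((\<phi> t - \<phi> 0) /\<^sub>R t)" if t: "0 < t" "t \<le> \<tau>" for t
  proof -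
    define g where "g = (\<lambda>s. \<beta> * s - a \<bullet> \<phi> s)"
    have sub: "{0..t} \<subseteq> D" using T t \<tau> by auto
    have act: "abs_continuous_on_interval \<phi> 0 t" using lac sub t by (simp add: loc_abs_continuous_on_def)
    have acg: "abs_continuous_on_interval g 0 t" unfolding g_def by (rule ac_affine[OF act])
    have der: "\<forall>s\<in>{0<..<t} - N. \<exists>d\<le>0. (g has_real_derivative d) (at s within {0..t})"
    proof
      fix s assume s: "s \<in> {0<..<t} - N"
      then have sD: "s \<in> D" using sub by auto
      obtain v' where v': "(\<phi> has_vector_derivative v') (at s within D)" "v' \<in> F (\<phi> s)"
        using NH[of s] s sD by auto
      have "\<phi> s \<in> ball x \<eta>" using near[of s] s t \<tau> by auto
      then have "v' \<in> U" using \<eta>U v'(2) by blast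
      then have vb: "\<beta> < a \<bullet> v'" by (simp add: U_def)
      have "(\<phi> has_vector_derivative v') (at s within {0..t})"
        using v'(1) sub by (rule has_vector_derivative_within_subset)
      then have "((\<lambda>s. a \<bullet> \<phi> s) has_vector_derivative a \<bullet> v') (at s within {0..t})"
        by (rule bounded_linear.has_vector_derivative[OF bounded_linear_inner_right])
      then have h1: "((\<lambda>s. a \<bullet> \<phi> s) has_real_derivative a \<bullet> v') (at s within {0..t})"
        by (simp add: has_real_derivative_iff_has_vector_derivative)
      have "(g has_real_derivative (\<beta> * 1 - a \<bullet> v')) (at s within {0..t})"
      proof -
        have h0: "((\<lambda>s. \<beta> * s) has_real_derivative \<beta> * 1) (at s within {0..t})"
          by (rule DERIV_cmult[OF DERIV_ident])
        show ?thesis unfolding g_def by (rule DERIV_diff[OF h0 h1])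
      qed
      then show "\<exists>d\<le>0. (g has_real_derivative d) (at s within {0..t})" using vb
        by (intro exI[of _ "\<beta> * 1 - a \<bullet> v'"]) auto
    qed
    have "g t \<le> g 0" using ac_mono[OF _ acg Nn der] t by simp
    then have "\<beta> * t \<le> a \<bullet> (\<phi> t - \<phi> 0)" by (simp add: g_def inner_diff_right)
    then have "\<beta> \<le> (a \<bullet> (\<phi> t - \<phi> 0)) / t" using t by (simp add: pos_le_divide_eq mult.commute)
    then show ?thesis by (simp add: divide_inverse_commute)
  qed
  have "eventually (\<lambda>i. ts i < \<tau>) sequentially" using ts(2) \<tau>(1) by (rule order_tendstoD)
  then have ev: "eventually (\<lambda>i. \<beta> \<le> a \<bullet> ((\<phi> (ts i) - \<phi> 0) /\<^sub>R ts i)) sequentially"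
    by (rule eventually_mono) (use key ts(1) in auto)
  have "(\<lambda>i. a \<bullet> ((\<phi> (ts i) - \<phi> 0) /\<^sub>R ts i)) \<longlonglongrightarrow> a \<bullet> v"
    by (intro tendsto_intros q)
  from tendsto_lowerbound[OF this ev] have "\<beta> \<le> a \<bullet> v" by simp
  then show False using a1 by simp
qed



lemma pairs:
  fixes A C :: "'a::euclidean_space set"
  assumes r: "r > 0" and P: "\<forall>x1\<in>A. \<forall>x2\<in>C. dist x1 x < r \<longrightarrow> dist x2 x < r \<longrightarrow>
           (\<exists>z\<in>A \<inter> C. norm (z - x1) \<le> M * norm (x1 - x2))"
    and t: "\<forall>i. t i > 0" "t \<longlonglongrightarrow> 0" and a: "av \<longlonglongrightarrow> v" and b: "bv \<longlonglongrightarrow> v"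
    and aA: "\<forall>i. x + t i *\<^sub>R av i \<in> A" and bC: "\<forall>i. x + t i *\<^sub>R bv i \<in> C"
  shows "v \<in> contingent_cone (A \<inter> C) x"
  unfolding cc_iff
proof (intro allI impI)
  fix e d :: real assume e: "e > 0" and d: "d > 0"
  define M' where "M' = \<bar>M\<bar> + 1"
  have ev1: "eventually (\<lambda>i. t i < d) sequentially" using t(2) d by (rule order_tendstoD)
  have "(\<lambda>i. x + t i *\<^sub>R av i) \<longlonglongrightarrow> x + 0 *\<^sub>R v" by (intro tendsto_intros t a)
  then have ev2: "eventually (\<lambda>i. dist (x + t i *\<^sub>R av i) x < r) sequentially" using r by (simp add: tendstoD)
  have "(\<lambda>i. x + t i *\<^sub>R bv i) \<longlonglongrightarrow> x + 0 *\<^sub>R v" by (intro tendsto_intros t b)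
  then have ev3: "eventually (\<lambda>i. dist (x + t i *\<^sub>R bv i) x < r) sequentially" using r by (simp add: tendstoD)
  have e2: "e/2 > 0" using e by simp
  have ev4: "eventually (\<lambda>i. dist (av i) v < e/2) sequentially" using a e2 by (rule tendstoD)
  have "(\<lambda>i. M' * norm (av i - bv i)) \<longlonglongrightarrow> M' * norm (v - v)" by (intro tendsto_intros a b)
  then have ev5: "eventually (\<lambda>i. M' * norm (av i - bv i) < e/2) sequentially" using e
    by (intro order_tendstoD) auto
  have "eventually (\<lambda>i. t i < d \<and> dist (x + t i *\<^sub>R av i) x < r \<and> dist (x + t i *\<^sub>R bv i) x < r \<and>
      dist (av i) v < e/2 \<and> M' * norm (av i - bv i) < e/2) sequentially"
    using eventually_conj[OF ev1 eventually_conj[OF ev2 eventually_conj[OF ev3 eventually_conj[OF ev4 ev5]]]] .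
  then obtain Nn where "\<forall>n\<ge>Nn. t n < d \<and> dist (x + t n *\<^sub>R av n) x < r \<and> dist (x + t n *\<^sub>R bv n) x < r \<and>
      dist (av n) v < e/2 \<and> M' * norm (av n - bv n) < e/2"
    unfolding eventually_sequentially by blast
  then have i: "t Nn < d" "dist (x + t Nn *\<^sub>R av Nn) x < r" "dist (x + t Nn *\<^sub>R bv Nn) x < r"
      "dist (av Nn) v < e/2" "M' * norm (av Nn - bv Nn) < e/2" by auto
  define ti where "ti = t Nn"
  have ti: "ti > 0" using t(1) by (simp add: ti_def)
  define x1 where "x1 = x + ti *\<^sub>R av Nn"
  define x2 where "x2 = x + ti *\<^sub>R bv Nn"
  obtain z where z: "z \<in> A \<inter> C" "norm (z - x1) \<le> M * norm (x1 - x2)"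
    using P aA bC i(2,3) unfolding x1_def x2_def ti_def by blast
  have nx: "norm (x1 - x2) = ti * norm (av Nn - bv Nn)"
  proof -
    have "x1 - x2 = ti *\<^sub>R (av Nn - bv Nn)" by (simp add: x1_def x2_def algebra_simps)
    then show ?thesis using ti by simp
  qed
  have "M * norm (x1 - x2) \<le> M' * norm (x1 - x2)" by (intro mult_right_mono) (auto simp: M'_def)
  then have zx1: "norm (z - x1) \<le> ti * (M' * norm (av Nn - bv Nn))" using z(2) nx by (simp add: algebra_simps)
  define w where "w = (1 / ti) *\<^sub>R (z - x)"
  have xw: "x + ti *\<^sub>R w = z" using ti by (simp add: w_def)
  have "w - av Nn = (1 / ti) *\<^sub>R (z - x1)" using ti by (simp add: w_def x1_def algebra_simps)
  then have "norm (w - av Nn) = norm (z - x1) / ti" using ti by simp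
  also have "\<dots> \<le> M' * norm (av Nn - bv Nn)" using zx1 ti by (simp add: divide_le_eq mult.commute)
  finally have "norm (w - av Nn) < e / 2" using i(5) by linarith
  moreover have "norm (av Nn - v) < e / 2" using i(4) by (simp add: dist_norm)
  moreover have "norm (w - v) \<le> norm (w - av Nn) + norm (av Nn - v)"
    using norm_triangle_ineq[of "w - av Nn" "av Nn - v"] by simp
  ultimately have "norm (w - v) < e" by linarith
  then show "\<exists>t w. 0 < t \<and> t < d \<and> norm (w - v) < e \<and> x + t *\<^sub>R w \<in> A \<inter> C"
    using ti i(1) xw z(1) unfolding ti_def by blast
qed



theorem proposition3:
  fixes C K :: "'a::euclidean_space set" and F :: "'a \<Rightarrow> 'a set"
    and \<phi> :: "real \<Rightarrow> 'a" and D :: "real set" and x :: 'a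
  assumes "closed K"
    and "standing_assumption C F"
    and "assumption1 C F K" and "assumption2 C F K" and "assumption3 C K"
    and "is_solution C F \<phi> D"
    and "\<phi> 0 = x" and "x \<in> bad_points C K"
    and "leaves_immediately C K \<phi> D"
  shows "closure (initial_speeds \<phi> D) \<subseteq>
           contingent_cone (frontier K \<inter> C) x - contingent_cone (frontier K - interior C) x"
proof -
  note SA = assms(2) and A1 = assms(3) and A2 = assms(4) and A3 = assms(5) and sol = assms(6)
    and x0 = assms(7) and xP = assms(8) and li = assms(9)
  have clC: "closed C" using SA by (simp add: standing_assumption_def)
  have xKC: "x \<in> frontier K" "x \<in> frontier C" using xP by (auto simp: bad_points_def)
  have xC: "x \<in> C" using frontier_subset_closed[OF clC] xKC(2) by auto
  have ccK: "contingent_cone (frontier K) x = adjacent_cone (frontier K) x"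
    and ccC: "contingent_cone C x = adjacent_cone C x"
    and A3c: "\<exists>N c \<alpha>. open N \<and> x \<in> N \<and> c > 0 \<and> 0 \<le> \<alpha> \<and> \<alpha> < 1 \<and>
        (\<forall>x1\<in>(frontier K - C) \<inter> N. \<forall>x2\<in>(frontier C - frontier K) \<inter> N.
           \<exists>v1\<in>contingent_cone (frontier K) x1. \<exists>v2\<in>contingent_cone C x2.
             norm (v1, v2) \<le> c * norm (x1 - x2) \<and>
             norm ((x2 - x1) - (v1 - v2)) \<le> \<alpha> * norm (x1 - x2))"
    using A3 xP unfolding assumption3_def by blast+
  then obtain N c \<alpha> where N: "open N" "x \<in> N" and c: "c > 0" and al: "0 \<le> \<alpha>" "\<alpha> < 1"
    and HN: "\<forall>x1\<in>(frontier K - C) \<inter> N. \<forall>x2\<in>(frontier C - frontier K) \<inter> N.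
           \<exists>v1\<in>contingent_cone (frontier K) x1. \<exists>v2\<in>contingent_cone C x2.
             norm (v1, v2) \<le> c * norm (x1 - x2) \<and>
             norm ((x2 - x1) - (v1 - v2)) \<le> \<alpha> * norm (x1 - x2)"
    by blast
  obtain T where T: "T > 0" "{0<..T} \<subseteq> D" "\<phi> ` {0<..T} \<subseteq> C - K"
    using li unfolding leaves_immediately_def by blast
  have "T \<in> D" using T by auto
  then have "0 \<in> D" using sol unfolding is_solution_def solution_domain_def by auto
  then have TD: "{0..T} \<subseteq> D" using T(2) by (auto simp: less_eq_real_def)
  have inC: "\<forall>t\<in>D. \<phi> t \<in> C" using sol by (simp add: is_solution_def)
  have spF: "initial_speeds \<phi> D \<subseteq> F x"
    using speeds_in_F[OF SA sol x0 xC T(1) TD] by blast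
  have Fxcl: "closed (F x)" using SA xC by (simp add: standing_assumption_def)
  have quot: "x + t *\<^sub>R ((\<phi> t - \<phi> 0) /\<^sub>R t) = \<phi> t" if "t > 0" for t
    using that x0 by simp
  have spC: "initial_speeds \<phi> D \<subseteq> contingent_cone C x"
  proof
    fix v assume "v \<in> initial_speeds \<phi> D"
    then obtain ts where ts: "\<forall>i. ts i > 0 \<and> ts i \<in> D" "ts \<longlonglongrightarrow> 0"
      and q: "(\<lambda>i. (\<phi> (ts i) - \<phi> 0) /\<^sub>R ts i) \<longlonglongrightarrow> v"
      unfolding initial_speeds_def by blast
    have "\<forall>i. x + ts i *\<^sub>R ((\<phi> (ts i) - \<phi> 0) /\<^sub>R ts i) \<in> C"
    proof
      fix i
      have e: "x + ts i *\<^sub>R ((\<phi> (ts i) - \<phi> 0) /\<^sub>R ts i) = \<phi> (ts i)" using ts(1) by (intro quot) auto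
      show "x + ts i *\<^sub>R ((\<phi> (ts i) - \<phi> 0) /\<^sub>R ts i) \<in> C" unfolding e using ts(1) inC by auto
    qed
    then show "v \<in> contingent_cone C x" unfolding contingent_cone_def
      using ts q by blast
  qed
  obtain r1 M1 where r1: "r1 > 0" and P1: "\<forall>x1\<in>frontier K. \<forall>x2\<in>C. dist x1 x < r1 \<longrightarrow> dist x2 x < r1 \<longrightarrow>
           (\<exists>z\<in>frontier K \<inter> C. norm (z - x1) \<le> M1 * norm (x1 - x2))"
    using inter_lemma[OF clC frontier_closed[of K] subset_refl _ _ N c al HN] by blast
  have A2cl: "closed (frontier K - interior C)" by (intro closed_Diff frontier_closed open_interior)
  have A2s: "frontier K - C \<subseteq> frontier K - interior C" using interior_subset by blast
  have A2f: "frontier K \<inter> frontier C \<subseteq> frontier K - interior C" by (auto simp: frontier_def)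
  obtain r2 M2 where r2: "r2 > 0" and P2: "\<forall>x1\<in>frontier K - interior C. \<forall>x2\<in>C. dist x1 x < r2 \<longrightarrow> dist x2 x < r2 \<longrightarrow>
           (\<exists>z\<in>(frontier K - interior C) \<inter> C. norm (z - x1) \<le> M2 * norm (x1 - x2))"
    using inter_lemma[OF clC A2cl Diff_subset A2s A2f N c al HN] by blast
  have sub1: "initial_speeds \<phi> D \<subseteq> contingent_cone (frontier K \<inter> C) x"
  proof
    fix v assume v: "v \<in> initial_speeds \<phi> D"
    then obtain ts where ts: "\<forall>i. ts i > 0 \<and> ts i \<in> D" "ts \<longlonglongrightarrow> 0"
      and q: "(\<lambda>i. (\<phi> (ts i) - \<phi> 0) /\<^sub>R ts i) \<longlonglongrightarrow> v"
      unfolding initial_speeds_def by blast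
    have tpos: "\<forall>i. ts i > 0" using ts(1) by blast
    have vF: "v \<in> F x" using v spF by blast
    have vK: "v \<in> contingent_cone K x" using A1 xP vF unfolding assumption1_def by blast
    have out: "\<forall>e>0. \<forall>d>0. \<exists>t w. 0 < t \<and> t < d \<and> norm (w - v) < e \<and> x + t *\<^sub>R w \<notin> K"
    proof (intro allI impI)
      fix e d :: real assume e: "e > 0" and d: "d > 0"
      have "eventually (\<lambda>i. ts i < min d T) sequentially" using ts(2) d T(1) by (intro order_tendstoD) auto
      moreover have "eventually (\<lambda>i. dist ((\<phi> (ts i) - \<phi> 0) /\<^sub>R ts i) v < e) sequentially"
        using q e by (rule tendstoD)
      ultimately have "eventually (\<lambda>i. ts i < min d T \<and> dist ((\<phi> (ts i) - \<phi> 0) /\<^sub>R ts i) v < e) sequentially"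
        by (rule eventually_conj)
      then obtain Nn where "\<forall>n\<ge>Nn. ts n < min d T \<and> dist ((\<phi> (ts n) - \<phi> 0) /\<^sub>R ts n) v < e"
        unfolding eventually_sequentially by blast
      then have i: "ts Nn < d" "ts Nn < T" "dist ((\<phi> (ts Nn) - \<phi> 0) /\<^sub>R ts Nn) v < e" by auto
      have "ts Nn \<in> {0<..T}" using i tpos by auto
      then have "\<phi> (ts Nn) \<in> \<phi> ` {0<..T}" by (rule imageI)
      then have "\<phi> (ts Nn) \<notin> K" using T(3) by blast
      moreover have "x + ts Nn *\<^sub>R ((\<phi> (ts Nn) - \<phi> 0) /\<^sub>R ts Nn) = \<phi> (ts Nn)" using tpos by (intro quot) auto
      ultimately have "x + ts Nn *\<^sub>R ((\<phi> (ts Nn) - \<phi> 0) /\<^sub>R ts Nn) \<notin> K" by simp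
      then show "\<exists>t w. 0 < t \<and> t < d \<and> norm (w - v) < e \<and> x + t *\<^sub>R w \<notin> K"
        using i tpos by (intro exI[of _ "ts Nn"] exI[of _ "(\<phi> (ts Nn) - \<phi> 0) /\<^sub>R ts Nn"]) (auto simp: dist_norm)
    qed
    have "v \<in> contingent_cone (frontier K) x" using cross[OF vK out] .
    then have "v \<in> adjacent_cone (frontier K) x" using ccK by simp
    then obtain w where w: "w \<longlonglongrightarrow> v" "\<forall>i. x + ts i *\<^sub>R w i \<in> frontier K"
      unfolding adjacent_cone_def using tpos ts(2) by blast
    have bC: "\<forall>i. x + ts i *\<^sub>R ((\<phi> (ts i) - \<phi> 0) /\<^sub>R ts i) \<in> C"
    proof
      fix i
      have e: "x + ts i *\<^sub>R ((\<phi> (ts i) - \<phi> 0) /\<^sub>R ts i) = \<phi> (ts i)" using ts(1) by (intro quot) auto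
      show "x + ts i *\<^sub>R ((\<phi> (ts i) - \<phi> 0) /\<^sub>R ts i) \<in> C" unfolding e using ts(1) inC by auto
    qed
    show "v \<in> contingent_cone (frontier K \<inter> C) x"
      using pairs[OF r1 P1 tpos ts(2) w(1) q w(2) bC] .
  qed
  have part1: "closure (initial_speeds \<phi> D) \<subseteq> contingent_cone (frontier K \<inter> C) x"
    using closure_minimal[OF sub1 cc_closed] .
  have clF: "closure (initial_speeds \<phi> D) \<subseteq> F x" using closure_minimal[OF spF Fxcl] .
  have clC': "closure (initial_speeds \<phi> D) \<subseteq> contingent_cone C x" using closure_minimal[OF spC cc_closed] .
  have part2: "v \<notin> contingent_cone (frontier K - interior C) x" if v: "v \<in> closure (initial_speeds \<phi> D)" for v
  proof
    assume vA: "v \<in> contingent_cone (frontier K - interior C) x"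
    then obtain s u where s: "\<forall>i. s i > 0" "s \<longlonglongrightarrow> 0" and u: "u \<longlonglongrightarrow> v"
      and uA: "\<forall>i. x + s i *\<^sub>R u i \<in> frontier K - interior C"
      unfolding contingent_cone_def by blast
    have "v \<in> adjacent_cone C x" using v clC' ccC by auto
    then obtain p where p: "p \<longlonglongrightarrow> v" "\<forall>i. x + s i *\<^sub>R p i \<in> C"
      unfolding adjacent_cone_def using s by blast
    have "v \<in> contingent_cone ((frontier K - interior C) \<inter> C) x"
      using pairs[OF r2 P2 s u p(1) uA p(2)] .
    moreover have "(frontier K - interior C) \<inter> C \<subseteq> frontier K \<inter> frontier C"
      using clC by (auto simp: frontier_def closure_closed)
    ultimately have "v \<in> contingent_cone (frontier K \<inter> frontier C) x" using cc_mono by blast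
    moreover have "v \<in> F x" using v clF by blast
    ultimately show False using A2 xP unfolding assumption2_def by blast
  qed
  show ?thesis using part1 part2 by blast
qed


end
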